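(* Let $q>2$ be a prime power, $m\ge1$, $n=q^m-1$, and suppose $n=r_1r_2$ with $r_1,r_2>1$, $\gcd(r_1,r_2)=1$ and $r_1=q^a-1$ for some natural number $a$; write $m=ab$. Fix a generator $\alpha$ of $\mathbb{F}_{q^m}^*$ and a group isomorphism $T:\mathbb{Z}_n\to\mathbb{Z}_{r_1}\times\mathbb{Z}_{r_2}$. Define subsets of $\mathbb{Z}_{r_1}\times\mathbb{Z}_{r_2}$: $$\gamma_1=\left\{(i_1,i_2)\ \middle|\ 0\le i_1<\tfrac{a(a-1)}{2},\ 0\le i_2<b^2\right\},$$ $$\gamma_2=\left\{(i_1,i_2)\ \middle|\ \tfrac{a(a-1)}{2}\le i_1<\tfrac{a(a+1)}{2},\ 0\le i_2<\tfrac{b(b+1)}{2}\right\},$$ $$\gamma_3=\left\{(i_1,i_2)\ \middle|\ \tfrac{a(a+1)}{2}\le i_1<\tfrac{a(a+3)}{2},\ 0\le i_2<b\right\},$$ and $\Gamma=\gamma_1\cup\gamma_2\cup\gamma_3$. Then $T^{-1}(\Gamma)\subseteq\mathbb{Z}_n$ is a set of check positions for the punctured code $R^*_q(m(q-1)-3,m)$ (i.e. $\{\alpha^i\mid i\in T^{-1}(\Gamma)\}$ is a set of check positions of it).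
   Context: $\mathbb{F}=\mathbb{F}_q$; elements of $\mathbb{Z}_r$ are identified with integers $0,\dots,r-1$. $\mathrm{wt}_q(k)$ is the sum of the base-$q$ digits of $k$. Let $G$ be the additive group of $\mathbb{F}_{q^m}$; words of length $q^m$ are vectors in $\mathbb{F}^G$, written $bX^0+\sum_{i=0}^{n-1}a_iX^{\alpha^i}$. For $0<\rho\le m(q-1)$, the generalized Reed–Muller code $R_q(\rho,m)$ consists of the words with $b\cdot 0^s+\sum_i a_i\alpha^{is}=0$ for every $0\le s<q^m-1$ with $\mathrm{wt}_q(s)<m(q-1)-\rho$ ($0^0=1$). The punctured code $R^*_q(\rho,m)$ is obtained by deleting coordinate $X^0$; its coordinates $\alpha^i$ are indexed by $i\in\mathbb{Z}_n$. For a linear code of dimension $k$ on coordinate set $P$, an information set is $I\subseteq P$, $|I|=k$, onto which the code projects surjectively onto $\mathbb{F}^k$; a set of check positions is the complement of an information set. *)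

theory Defs
  imports "HOL-Computational_Algebra.Primes"
begin

fun wt_q :: "nat \<Rightarrow> nat \<Rightarrow> nat" where
  "wt_q q k = (if q \<le> 1 \<or> k = 0 then 0 else k mod q + wt_q q (k div q))"

declare wt_q.simps[simp del]

definition subfield_q :: "nat \<Rightarrow> 'a::field set" where
  "subfield_q q = {x. x ^ q = x}"

text \<open>Words are functions
  a :: nat => 'a with a i in F_q for i < n (coordinate alpha^i) and a i = 0 for i >= n.
  A word is in the punctured code iff it extends, by some value b in F_q at the
  coordinate X^0, to a word of R_q(rho,m). Here 0^0 = 1 as in Isabelle.\<close>
definition punctured_GRM ::
  "nat \<Rightarrow> nat \<Rightarrow> nat \<Rightarrow> 'a::field \<Rightarrow> (nat \<Rightarrow> 'a) set" where
  "punctured_GRM q m \<rho> \<alpha> =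
     {a. (\<forall>i < q^m - 1. a i \<in> subfield_q q) \<and> (\<forall>i \<ge> q^m - 1. a i = 0) \<and>
         (\<exists>b \<in> subfield_q q. \<forall>s < q^m - 1. wt_q q s < m * (q - 1) - \<rho> \<longrightarrow>
             b * 0 ^ s + (\<Sum>i < q^m - 1. a i * \<alpha> ^ (i * s)) = 0)}"

definition information_set ::
  "nat \<Rightarrow> nat set \<Rightarrow> (nat \<Rightarrow> 'a::field) set \<Rightarrow> nat set \<Rightarrow> bool" where
  "information_set q P C I \<longleftrightarrow> I \<subseteq> P \<and> card C = q ^ card I \<and>
     (\<forall>v. (\<forall>i\<in>I. v i \<in> subfield_q q) \<longrightarrow> (\<exists>c\<in>C. \<forall>i\<in>I. c i = v i))"

definition check_positions ::
  "nat \<Rightarrow> nat set \<Rightarrow> (nat \<Rightarrow> 'a::field) set \<Rightarrow> nat set \<Rightarrow> bool" where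
  "check_positions q P C J \<longleftrightarrow> J \<subseteq> P \<and> information_set q P C (P - J)"

definition Gamma_set :: "nat \<Rightarrow> nat \<Rightarrow> (nat \<times> nat) set" where
  "Gamma_set a b =
     {(i1, i2). i1 < a * (a - 1) div 2 \<and> i2 < b^2} \<union>
     {(i1, i2). a * (a - 1) div 2 \<le> i1 \<and> i1 < a * (a + 1) div 2 \<and> i2 < b * (b + 1) div 2} \<union>
     {(i1, i2). a * (a + 1) div 2 \<le> i1 \<and> i1 < a * (a + 3) div 2 \<and> i2 < b}"

end

theory Submission
  imports Defs "HOL-Computational_Algebra.Polynomial" "HOL-Library.FuncSet" "HOL-Number_Theory.Cong"
begin

lemma vdm:
  fixes z y :: "nat \<Rightarrow> 'K::field"
  assumes dist: "\<And>i j. i < K \<Longrightarrow> j < K \<Longrightarrow> i \<noteq> j \<Longrightarrow> z i \<noteq> z j"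
    and eq: "\<And>j. j < K \<Longrightarrow> (\<Sum>i<K. y i * z i ^ j) = 0"
    and d: "d < K"
  shows "y d = 0"
proof -
  define P where "P = (\<Prod>i\<in>{..<K}-{d}. [:- z i, 1:])"
  have degP: "degree P = K - 1"
    unfolding P_def using d by (subst degree_prod_eq_sum_degree) auto
  have polyP: "poly P x = (\<Sum>j<K. coeff P j * x ^ j)" for x
  proof -
    have "poly P x = (\<Sum>j\<le>degree P. coeff P j * x ^ j)" by (rule poly_altdef)
    also have "\<dots> = (\<Sum>j<K. coeff P j * x ^ j)"
      using d degP by (intro sum.cong) auto
    finally show ?thesis .
  qed
  have "0 = (\<Sum>j<K. coeff P j * (\<Sum>i<K. y i * z i ^ j))"
    using eq by (auto intro!: sum.neutral[symmetric])
  also have "\<dots> = (\<Sum>j<K. \<Sum>i<K. y i * (coeff P j * z i ^ j))"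
    by (simp add: sum_distrib_left mult_ac)
  also have "\<dots> = (\<Sum>i<K. \<Sum>j<K. y i * (coeff P j * z i ^ j))"
    by (rule sum.swap)
  also have "\<dots> = (\<Sum>i<K. y i * (\<Sum>j<K. coeff P j * z i ^ j))"
    by (simp add: sum_distrib_left)
  also have "\<dots> = (\<Sum>i<K. y i * poly P (z i))"
    by (simp only: polyP)
  also have "\<dots> = y d * poly P (z d) + (\<Sum>i\<in>{..<K}-{d}. y i * poly P (z i))"
    by (rule sum.remove) (use d in auto)
  also have "(\<Sum>i\<in>{..<K}-{d}. y i * poly P (z i)) = 0"
    unfolding P_def by (intro sum.neutral) (auto simp: poly_prod)
  finally have "y d * poly P (z d) = 0" by simp
  moreover have "poly P (z d) \<noteq> 0"
    unfolding P_def using dist d by (auto simp: poly_prod)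
  ultimately show ?thesis by simp
qed

lemma alg:
  fixes Bv :: "nat \<Rightarrow> 'K::field" and Cv :: "nat \<Rightarrow> nat \<Rightarrow> 'K"
    and N :: "nat \<Rightarrow> nat" and lam :: "nat \<Rightarrow> nat \<Rightarrow> 'K"
  assumes "\<And>k k'. k < A \<Longrightarrow> k' < A \<Longrightarrow> k \<noteq> k' \<Longrightarrow> Bv k \<noteq> Bv k'"
    and "\<And>k t t'. k < A \<Longrightarrow> t < N k \<Longrightarrow> t' < N k \<Longrightarrow> t \<noteq> t' \<Longrightarrow> Cv k t \<noteq> Cv k t'"
    and "\<And>k k'. k \<le> k' \<Longrightarrow> k' < A \<Longrightarrow> N k' \<le> N k"
    and "\<And>j1 j2. j1 < A \<Longrightarrow> j2 < N j1 \<Longrightarrow>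
           (\<Sum>k<A. \<Sum>t<N k. lam k t * Bv k ^ j1 * Cv k t ^ j2) = 0"
  shows "\<forall>k<A. \<forall>t<N k. lam k t = 0"
  using assms
proof (induction A)
  case 0
  then show ?case by simp
next
  case (Suc A)
  have last: "lam A t = 0" if tA: "t < N A" for t
  proof -
    have g0: "(\<Sum>t<N A. lam A t * Cv A t ^ j2) = 0" if j2: "j2 < N A" for j2
    proof -
      let ?g = "\<lambda>k. \<Sum>t<N k. lam k t * Cv k t ^ j2"
      have "?g A = 0"
      proof (rule vdm[where z=Bv and K="Suc A" and y="?g"])
        show "\<And>i j. i < Suc A \<Longrightarrow> j < Suc A \<Longrightarrow> i \<noteq> j \<Longrightarrow> Bv i \<noteq> Bv j"
          by (rule Suc.prems(1))
        fix j1 assume j1: "j1 < Suc A"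
        then have "j2 < N j1" using j2 Suc.prems(3)[of j1 A] by auto
        then have "(\<Sum>k<Suc A. \<Sum>t<N k. lam k t * Bv k ^ j1 * Cv k t ^ j2) = 0"
          using Suc.prems(4) j1 by blast
        moreover have "(\<Sum>i<Suc A. ?g i * Bv i ^ j1) =
            (\<Sum>k<Suc A. \<Sum>t<N k. lam k t * Bv k ^ j1 * Cv k t ^ j2)"
          by (intro sum.cong refl) (simp add: sum_distrib_left mult_ac)
        ultimately show "(\<Sum>i<Suc A. ?g i * Bv i ^ j1) = 0" by simp
      qed simp
      then show ?thesis by simp
    qed
    show ?thesis
      by (rule vdm[where z="Cv A" and K="N A" and y="lam A"]) (use Suc.prems(2) g0 tA in auto)
  qed
  have IH: "\<forall>k<A. \<forall>t<N k. lam k t = 0"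
  proof (rule Suc.IH)
    fix j1 j2 assume j1: "j1 < A" and j2: "j2 < N j1"
    have "(\<Sum>k<Suc A. \<Sum>t<N k. lam k t * Bv k ^ j1 * Cv k t ^ j2) = 0"
      using Suc.prems(4) j1 j2 by simp
    then show "(\<Sum>k<A. \<Sum>t<N k. lam k t * Bv k ^ j1 * Cv k t ^ j2) = 0"
      using last by simp
  qed (use Suc.prems in auto)
  show ?case
    using IH last less_Suc_eq by auto
qed

lemma sq_surj:
  fixes M :: "'s \<Rightarrow> 'j \<Rightarrow> 'K::{finite,field}"
  assumes fS: "finite S" and fJ: "finite J" and cd: "card S = card J"
    and inj: "\<And>lam. \<forall>j\<in>J. (\<Sum>s\<in>S. lam s * M s j) = 0 \<Longrightarrow> \<forall>s\<in>S. lam s = 0"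
  shows "\<exists>lam. \<forall>j\<in>J. (\<Sum>s\<in>S. lam s * M s j) = v j"
proof -
  define Psi where "Psi = (\<lambda>lam. restrict (\<lambda>j. \<Sum>s\<in>S. lam s * M s j) J)"
  let ?A = "PiE S (\<lambda>_. UNIV :: 'K set)"
  let ?B = "PiE J (\<lambda>_. UNIV :: 'K set)"
  have injP: "inj_on Psi ?A"
  proof (rule inj_onI)
    fix l1 l2 assume l1: "l1 \<in> ?A" and l2: "l2 \<in> ?A" and eq: "Psi l1 = Psi l2"
    have "\<forall>j\<in>J. (\<Sum>s\<in>S. (l1 s - l2 s) * M s j) = 0"
    proof
      fix j assume j: "j \<in> J"
      have "(\<Sum>s\<in>S. l1 s * M s j) = (\<Sum>s\<in>S. l2 s * M s j)"
        using fun_cong[OF eq, of j] j unfolding Psi_def by simp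
      then show "(\<Sum>s\<in>S. (l1 s - l2 s) * M s j) = 0"
        by (simp add: algebra_simps sum_subtractf)
    qed
    from inj[OF this] have "\<forall>s\<in>S. l1 s = l2 s" by simp
    then show "l1 = l2" using l1 l2 by (intro PiE_ext) auto
  qed
  have sub: "Psi ` ?A \<subseteq> ?B" unfolding Psi_def by auto
  have cA: "card ?A = card (UNIV :: 'K set) ^ card S" using fS by (simp add: card_PiE)
  have cB: "card ?B = card (UNIV :: 'K set) ^ card J" using fJ by (simp add: card_PiE)
  have "card (Psi ` ?A) = card ?B"
    using card_image[OF injP] cA cB cd by simp
  moreover have "finite ?B" using fJ by (simp add: finite_PiE)
  ultimately have img: "Psi ` ?A = ?B"
    using card_subset_eq[OF _ sub] by simp
  have "restrict v J \<in> ?B" by simp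
  then obtain lam where "lam \<in> ?A" and lam: "Psi lam = restrict v J"
    using img by (metis imageE)
  have "\<forall>j\<in>J. (\<Sum>s\<in>S. lam s * M s j) = v j"
  proof
    fix j assume "j \<in> J"
    then show "(\<Sum>s\<in>S. lam s * M s j) = v j"
      using fun_cong[OF lam, of j] unfolding Psi_def by simp
  qed
  then show ?thesis by blast
qed

lemma sq_uniq:
  fixes M :: "'s \<Rightarrow> 'j \<Rightarrow> 'K::{finite,field}"
  assumes fS: "finite S" and fJ: "finite J" and cd: "card S = card J"
    and inj: "\<And>lam. \<forall>j\<in>J. (\<Sum>s\<in>S. lam s * M s j) = 0 \<Longrightarrow> \<forall>s\<in>S. lam s = 0"
    and c: "\<forall>s\<in>S. (\<Sum>j\<in>J. c j * M s j) = 0"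
  shows "\<forall>j\<in>J. c j = 0"
proof
  fix j0 assume j0: "j0 \<in> J"
  obtain lam where lam: "\<forall>j\<in>J. (\<Sum>s\<in>S. lam s * M s j) = (if j = j0 then 1 else 0)"
    using sq_surj[of S J M "\<lambda>j. if j = j0 then 1 else 0", OF fS fJ cd inj] by blast
  have "(\<Sum>j\<in>J. c j * (if j = j0 then 1 else 0)) = (\<Sum>j\<in>J. if j = j0 then c j else 0)"
    by (intro sum.cong) auto
  also have "\<dots> = c j0" using j0 fJ by (simp add: sum.delta)
  finally have "c j0 = (\<Sum>j\<in>J. c j * (if j = j0 then 1 else 0))" by simp
  also have "\<dots> = (\<Sum>j\<in>J. c j * (\<Sum>s\<in>S. lam s * M s j))"
    using lam by (intro sum.cong) auto
  also have "\<dots> = (\<Sum>j\<in>J. \<Sum>s\<in>S. lam s * (c j * M s j))"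
    by (simp add: sum_distrib_left mult_ac)
  also have "\<dots> = (\<Sum>s\<in>S. \<Sum>j\<in>J. lam s * (c j * M s j))"
    by (rule sum.swap)
  also have "\<dots> = (\<Sum>s\<in>S. lam s * (\<Sum>j\<in>J. c j * M s j))"
    by (simp add: sum_distrib_left)
  also have "\<dots> = 0" using c by simp
  finally show "c j0 = 0" .
qed

lemma sq_exist:
  fixes M :: "'s \<Rightarrow> 'j \<Rightarrow> 'K::{finite,field}"
  assumes fS: "finite S" and fJ: "finite J" and cd: "card S = card J"
    and inj: "\<And>lam. \<forall>j\<in>J. (\<Sum>s\<in>S. lam s * M s j) = 0 \<Longrightarrow> \<forall>s\<in>S. lam s = 0"
  shows "\<exists>c. \<forall>s\<in>S. (\<Sum>j\<in>J. c j * M s j) = w s"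
proof -
  have "\<exists>c. \<forall>s\<in>S. (\<Sum>j\<in>J. c j * (\<lambda>j s. M s j) j s) = w s"
  proof (rule sq_surj[OF fJ fS cd[symmetric]])
    fix c assume "\<forall>s\<in>S. (\<Sum>j\<in>J. c j * (\<lambda>j s. M s j) j s) = 0"
    then show "\<forall>j\<in>J. c j = 0"
      using sq_uniq[OF fS fJ cd inj] by simp
  qed
  then show ?thesis by simp
qed

lemma wt0: "wt_q q 0 = 0"
  by (subst wt_q.simps) simp

lemma wt_rec: "1 < q \<Longrightarrow> wt_q q s = s mod q + wt_q q (s div q)"
proof (cases "s = 0")
  case True then show ?thesis by (simp add: wt0)
next
  case False
  assume "1 < q"
  then show ?thesis using False by (subst wt_q.simps) simp
qed

lemma wt_zero_iff: assumes "1 < q" shows "wt_q q s = 0 \<longleftrightarrow> s = 0"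
proof (induction s rule: less_induct)
  case (less s)
  show ?case
  proof (cases "s = 0")
    case True then show ?thesis by (simp add: wt0)
  next
    case False
    then have "s div q < s" using assms by simp
    have "wt_q q s = 0 \<Longrightarrow> False"
    proof -
      assume "wt_q q s = 0"
      then have "s mod q = 0" "wt_q q (s div q) = 0" using wt_rec[OF assms, of s] by auto
      then have "s div q = 0" using less.IH[OF \<open>s div q < s\<close>] by simp
      then show False using \<open>s mod q = 0\<close> False using div_mult_mod_eq[of s q] by simp
    qed
    then show ?thesis using False by auto
  qed
qed

lemma wt_add_shift:
  assumes q: "1 < q"
  shows "x < q ^ k \<Longrightarrow> wt_q q (x + q ^ k * y) = wt_q q x + wt_q q y"
proof (induction k arbitrary: x)
  case 0
  then show ?case by (simp add: wt0)
next
  case (Suc k)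
  have e: "x + q ^ Suc k * y = x + q * (q ^ k * y)" by (simp add: mult_ac)
  have m: "(x + q ^ Suc k * y) mod q = x mod q"
    unfolding e by (rule mod_mult_self2)
  have d: "(x + q ^ Suc k * y) div q = x div q + q ^ k * y"
    unfolding e using q by simp
  have xd: "x div q < q ^ k"
    using Suc.prems q by (simp add: div_less_iff_less_mult mult_ac)
  show ?case
    using wt_rec[OF q, of "x + q ^ Suc k * y"] wt_rec[OF q, of x] m d Suc.IH[OF xd] by simp
qed

lemma wt_one: "1 < q \<Longrightarrow> wt_q q 1 = 1"
  using wt_rec[of q 1] by (simp add: wt0)

lemma wt_two: "2 < q \<Longrightarrow> wt_q q 2 = 2"
  using wt_rec[of q 2] by (simp add: wt0)

lemma wt_pow: assumes q: "1 < q" shows "wt_q q (q ^ x) = 1"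
proof -
  have "wt_q q (0 + q ^ x * 1) = wt_q q 0 + wt_q q 1"
    by (rule wt_add_shift[OF q]) (use q in simp)
  then have h: "wt_q q (q ^ x) = wt_q q 0 + wt_q q 1" by simp
  show ?thesis unfolding h wt0 wt_one[OF q] by simp
qed

lemma wt_pow2:
  assumes q: "2 < q" and xy: "x \<le> y"
  shows "wt_q q (q ^ x + q ^ y) = 2"
proof (cases "x = y")
  case True
  then have "q ^ x + q ^ y = 0 + q ^ x * 2" by (simp add: mult_2_right)
  then have "wt_q q (q ^ x + q ^ y) = wt_q q (0 + q ^ x * 2)" by (rule arg_cong)
  also have "\<dots> = wt_q q 0 + wt_q q 2" using q by (intro wt_add_shift) auto
  finally show ?thesis using wt_two[OF q] by (simp add: wt0)
next
  case False
  have lt: "q ^ x < q ^ y" using xy q False by (simp add: power_strict_increasing)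
  have "wt_q q (q ^ x + q ^ y * 1) = wt_q q (q ^ x) + wt_q q 1"
    by (rule wt_add_shift[of q "q ^ x" y 1]) (use q lt in simp)+
  then have h: "wt_q q (q ^ x + q ^ y) = wt_q q (q ^ x) + wt_q q 1" by simp
  have q1: "1 < q" using q by simp
  show ?thesis unfolding h wt_pow[OF q1, of x] wt_one[OF q1] by simp
qed

lemma wt_classify:
  assumes q: "2 < q"
  shows "0 < s \<Longrightarrow> wt_q q s \<le> 2 \<Longrightarrow>
     (\<exists>x. s = q ^ x) \<or> (\<exists>x y. x \<le> y \<and> s = q ^ x + q ^ y)"
proof (induction s rule: less_induct)
  case (less s)
  define r where "r = s mod q"
  define s' where "s' = s div q"
  have q1: "1 < q" using q by simp
  have s_eq: "s = r + q * s'" unfolding r_def s'_def by simp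
  have w: "wt_q q s = r + wt_q q s'" unfolding r_def s'_def by (rule wt_rec[OF q1])
  have lt: "s' < s" unfolding s'_def using less.prems q by simp
  consider "r = 0" | "r = 1" | "r = 2" | "r \<ge> 3" by linarith
  then show ?case
  proof cases
    case 1
    then have "s' > 0" using s_eq less.prems by (cases "s' = 0") auto
    moreover have "wt_q q s' \<le> 2" using w less.prems 1 by simp
    ultimately have "(\<exists>x. s' = q ^ x) \<or> (\<exists>x y. x \<le> y \<and> s' = q ^ x + q ^ y)"
      using less.IH[OF lt] by blast
    then show ?thesis
    proof
      assume "\<exists>x. s' = q ^ x"
      then obtain x where "s' = q ^ x" by blast
      then have "s = q ^ Suc x" using s_eq 1 by simp
      then show ?thesis by blast
    next
      assume "\<exists>x y. x \<le> y \<and> s' = q ^ x + q ^ y"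
      then obtain x y where "x \<le> y" "s' = q ^ x + q ^ y" by blast
      then have "Suc x \<le> Suc y \<and> s = q ^ Suc x + q ^ Suc y" using s_eq 1 by (simp add: algebra_simps)
      then show ?thesis by blast
    qed
  next
    case 2
    show ?thesis
    proof (cases "s' = 0")
      case True
      then have "s = q ^ 0" using s_eq 2 by simp
      then show ?thesis by blast
    next
      case False
      have "wt_q q s' \<le> 1" using w less.prems 2 by simp
      then have "(\<exists>x. s' = q ^ x) \<or> (\<exists>x y. x \<le> y \<and> s' = q ^ x + q ^ y)"
        using less.IH[OF lt] False by simp
      moreover have "\<not> (\<exists>x y. x \<le> y \<and> s' = q ^ x + q ^ y)"
        using wt_pow2[OF q] \<open>wt_q q s' \<le> 1\<close> by force
      ultimately obtain x where "s' = q ^ x" by blast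
      then have "0 \<le> Suc x \<and> s = q ^ 0 + q ^ Suc x" using s_eq 2 by simp
      then show ?thesis by blast
    qed
  next
    case 3
    then have "wt_q q s' = 0" using w less.prems by simp
    then have "s' = 0" using wt_zero_iff[OF q1] by simp
    then have "(0::nat) \<le> 0 \<and> s = q ^ 0 + q ^ 0" using s_eq 3 by simp
    then show ?thesis by blast
  next
    case 4
    then show ?thesis using w less.prems by simp
  qed
qed

lemma pow2_mod_q0: "1 < q \<Longrightarrow> 0 < x \<Longrightarrow> x \<le> y \<Longrightarrow> (q ^ x + q ^ y) mod (q::nat) = 0"
  by (simp add: mod_add_eq[symmetric] power_mod)

lemma pow2_mod_q1: assumes q: "2 < q" shows "(q ^ 0 + q ^ y) mod (q::nat) \<noteq> 0"
proof (cases y)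
  case 0
  then show ?thesis using q by simp
next
  case (Suc n)
  have "(1 + q * q ^ n) mod q = 1 mod q" by (rule mod_mult_self2)
  then show ?thesis using Suc q by simp
qed

lemma pow2_inj:
  fixes q :: nat
  assumes q: "2 < q"
  shows "x \<le> y \<Longrightarrow> x' \<le> y' \<Longrightarrow> q ^ x + q ^ y = q ^ x' + q ^ y' \<Longrightarrow> x = x' \<and> y = y'"
proof (induction x arbitrary: x' y y')
  case 0
  show ?case
  proof (cases x')
    case 0
    then show ?thesis using "0.prems" q by (simp add: power_inject_exp)
  next
    case (Suc x0)
    then show ?thesis using pow2_mod_q0[of q x' y'] pow2_mod_q1[OF q, of y] "0.prems" q by simp
  qed
next
  case (Suc x)
  show ?case
  proof (cases x')
    case 0
    have "(q ^ Suc x + q ^ y) mod q = 0" using pow2_mod_q0[of q "Suc x" y] Suc.prems(1) q by simp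
    moreover have "(q ^ x' + q ^ y') mod q \<noteq> 0" using pow2_mod_q1[OF q, of y'] 0 by simp
    moreover have "(q ^ Suc x + q ^ y) mod q = (q ^ x' + q ^ y') mod q"
      using Suc.prems(3) by (simp only:)
    ultimately show ?thesis by simp
  next
    case (Suc x0)
    obtain y0 where y0: "y = Suc y0" using Suc.prems(1) by (cases y) auto
    obtain y0' where y0': "y' = Suc y0'" using Suc.prems(2) Suc by (cases y') auto
    have "q * (q ^ x + q ^ y0) = q * (q ^ x0 + q ^ y0')"
      using Suc.prems(3) Suc y0 y0' by (simp add: algebra_simps)
    then have "q ^ x + q ^ y0 = q ^ x0 + q ^ y0'" using q by simp
    then show ?thesis using Suc.IH[of y0 x0 y0'] Suc.prems Suc y0 y0' by simp
  qed
qed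

lemma pow_ne_pow2: "2 < q \<Longrightarrow> x' \<le> y' \<Longrightarrow> q ^ x \<noteq> q ^ x' + (q::nat) ^ y'"
  using wt_pow[of q x] wt_pow2[of q x' y'] by auto

fun tri :: "nat \<Rightarrow> nat" where
  "tri 0 = 0" | "tri (Suc l) = tri l + Suc l"

lemma tri_eq: "tri l = l * (l + 1) div 2"
  by (induction l) auto

lemma tri_mono: "l1 \<le> l2 \<Longrightarrow> tri l1 \<le> tri l2"
  by (induction l2) (auto simp: le_Suc_eq)

lemma tp_inj:
  assumes "k \<le> l" "k' \<le> l'" "tri l + k = tri l' + k'"
  shows "k = k' \<and> l = l'"
proof -
  have "\<not> l < l'"
  proof
    assume "l < l'"
    then have "tri (Suc l) \<le> tri l'" by (intro tri_mono) simp
    then show False using assms by simp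
  qed
  moreover have "\<not> l' < l"
  proof
    assume "l' < l"
    then have "tri (Suc l') \<le> tri l" by (intro tri_mono) simp
    then show False using assms by simp
  qed
  ultimately show ?thesis using assms by simp
qed

lemma tp_bound: "k \<le> l \<Longrightarrow> (tri l + k < tri N \<longleftrightarrow> l < N)"
proof
  assume "k \<le> l" "tri l + k < tri N"
  show "l < N"
  proof (rule ccontr)
    assume "\<not> l < N"
    then have "tri N \<le> tri l" by (intro tri_mono) simp
    then show False using \<open>tri l + k < tri N\<close> by simp
  qed
next
  assume "k \<le> l" "l < N"
  then have "tri (Suc l) \<le> tri N" by (intro tri_mono) simp
  then show "tri l + k < tri N" using \<open>k \<le> l\<close> by simp
qed

lemma tp_surj: "\<exists>k l. k \<le> l \<and> z = tri l + k"
proof (induction z)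
  case 0
  then show ?case by (intro exI[of _ 0]) simp
next
  case (Suc z)
  then obtain k l where kl: "k \<le> l" "z = tri l + k" by blast
  show ?case
  proof (cases "k < l")
    case True
    then show ?thesis using kl by (intro exI[of _ "Suc k"] exI[of _ l]) simp
  next
    case False
    then show ?thesis using kl by (intro exI[of _ 0] exI[of _ "Suc l"]) simp
  qed
qed

definition untri :: "nat \<Rightarrow> nat \<times> nat" where
  "untri z = (SOME p. fst p \<le> snd p \<and> z = tri (snd p) + fst p)"

lemma untri: "fst (untri z) \<le> snd (untri z) \<and> z = tri (snd (untri z)) + fst (untri z)"
proof -
  obtain k l where "k \<le> l \<and> z = tri l + k" using tp_surj by blast
  then have "\<exists>p. fst p \<le> snd p \<and> z = tri (snd p) + fst p" by (intro exI[of _ "(k,l)"]) simp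
  then show ?thesis unfolding untri_def by (rule someI_ex)
qed

lemma untri_tp: "k \<le> l \<Longrightarrow> untri (tri l + k) = (k, l)"
proof -
  assume kl: "k \<le> l"
  obtain k' l' where u: "untri (tri l + k) = (k', l')" by (cases "untri (tri l + k)")
  then have "k' \<le> l'" "tri l + k = tri l' + k'" using untri[of "tri l + k"] by auto
  then have "k' = k \<and> l' = l" using tp_inj[of k' l' k l] kl by simp
  then show ?thesis using u by simp
qed

lemma fin_field_pow:
  fixes x :: "'K::{finite,field}"
  assumes x: "x \<noteq> 0"
  shows "x ^ (card (UNIV :: 'K set) - 1) = 1"
proof -
  let ?U = "UNIV - {0::'K}"
  have "(\<Prod>y\<in>?U. x * y) = (\<Prod>y\<in>?U. y)"
    by (rule prod.reindex_bij_witness[of _ "\<lambda>y. y / x" "\<lambda>y. x * y"]) (use x in auto)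
  moreover have "(\<Prod>y\<in>?U. x * y) = x ^ card ?U * (\<Prod>y\<in>?U. y)"
    by (simp add: prod.distrib)
  moreover have "(\<Prod>y\<in>?U. y) \<noteq> 0" by simp
  moreover have "card ?U = card (UNIV :: 'K set) - 1"
    by (simp add: card_Diff_singleton)
  ultimately show ?thesis by simp
qed

lemma of_nat_card_zero: "of_nat (card (UNIV :: 'K::{finite,field} set)) = (0::'K)"
proof -
  have "(\<Sum>y\<in>(UNIV::'K set). y + 1) = (\<Sum>y\<in>UNIV. y)"
    by (rule sum.reindex_bij_witness[of _ "\<lambda>y. y - 1" "\<lambda>y. y + 1"]) auto
  moreover have "(\<Sum>y\<in>(UNIV::'K set). y + 1) = (\<Sum>y\<in>UNIV. y) + of_nat (card (UNIV :: 'K set))"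
    by (simp add: sum.distrib)
  ultimately show ?thesis by simp
qed

lemma pow_mod_eq:
  fixes x :: "'K::field"
  assumes "x ^ n = 1"
  shows "x ^ k = x ^ (k mod n)"
proof -
  have "x ^ k = x ^ (n * (k div n) + k mod n)" by simp
  also have "\<dots> = (x ^ n) ^ (k div n) * x ^ (k mod n)" by (subst power_add) (simp add: power_mult)
  finally show ?thesis using assms by simp
qed

locale grm =
  fixes q m r1 r2 a b :: nat
    and \<alpha> :: "'K::{finite,field}"
    and T :: "nat \<Rightarrow> nat \<times> nat"
  assumes q_pp: "\<exists>p k. prime p \<and> k > 0 \<and> q = p ^ k"
    and q_gt: "q > 2"
    and m_pos: "m \<ge> 1"
    and card_K: "card (UNIV :: 'K set) = q ^ m"
    and n_fact: "q ^ m - 1 = r1 * r2"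
    and r1_gt: "r1 > 1" and r2_gt: "r2 > 1"
    and coprime: "coprime r1 r2"
    and r1_def: "r1 = q ^ a - 1"
    and m_ab: "m = a * b"
    and gen_nz: "\<alpha> \<noteq> 0"
    and gen: "\<forall>x::'K. x \<noteq> 0 \<longrightarrow> (\<exists>k. x = \<alpha> ^ k)"
    and T_bij: "bij_betw T {..< q ^ m - 1} ({..< r1} \<times> {..< r2})"
    and T_hom: "\<forall>i < q ^ m - 1. \<forall>j < q ^ m - 1.
                  T ((i + j) mod (q ^ m - 1)) =
                  ((fst (T i) + fst (T j)) mod r1, (snd (T i) + snd (T j)) mod r2)"
begin

abbreviation "n \<equiv> q ^ m - 1"

lemma q1: "1 < q" using q_gt by simp

lemma n_pos: "0 < n" using n_fact r1_gt r2_gt by simp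

lemma a_pos: "0 < a"
  using r1_gt r1_def by (cases a) auto

lemma b_ge2: "2 \<le> b"
proof (rule ccontr)
  assume "\<not> 2 \<le> b"
  then consider "b = 0" | "b = 1" by linarith
  then show False
  proof cases
    case 1 then show False using m_pos m_ab by simp
  next
    case 2
    then have "n = r1" using m_ab r1_def by simp
    then show False using n_fact r1_gt r2_gt by simp
  qed
qed

lemma alpha_n: "\<alpha> ^ n = 1"
  using fin_field_pow[OF gen_nz] card_K by simp

lemma alpha_mod: "\<alpha> ^ k = \<alpha> ^ (k mod n)"
  by (rule pow_mod_eq[OF alpha_n])

lemma alpha_inj_lt:
  assumes ij: "i < n" "j < n" and eq: "\<alpha> ^ i = \<alpha> ^ j"
  shows "i = j"
proof (rule ccontr)
  assume ne: "i \<noteq> j"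
  have "\<exists>d. 0 < d \<and> d < n \<and> \<alpha> ^ d = 1"
  proof (cases "i < j")
    case True
    have "\<alpha> ^ j = \<alpha> ^ i * \<alpha> ^ (j - i)" using True by (simp flip: power_add)
    then have "\<alpha> ^ (j - i) = 1" using eq gen_nz by simp
    then show ?thesis using True ij by (intro exI[of _ "j - i"]) auto
  next
    case False
    then have ji: "j < i" using ne by simp
    have "\<alpha> ^ i = \<alpha> ^ j * \<alpha> ^ (i - j)" using ji by (simp flip: power_add)
    then have "\<alpha> ^ (i - j) = 1" using eq gen_nz by simp
    then show ?thesis using ji ij by (intro exI[of _ "i - j"]) auto
  qed
  then obtain d where d: "0 < d" "d < n" "\<alpha> ^ d = 1" by blast
  have "UNIV - {0::'K} \<subseteq> (\<lambda>k. \<alpha> ^ k) ` {..<d}"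
  proof
    fix x :: 'K assume "x \<in> UNIV - {0}"
    then obtain k where "x = \<alpha> ^ k" using gen by blast
    then have "x = \<alpha> ^ (k mod d)" using pow_mod_eq[OF d(3)] by simp
    moreover have "k mod d < d" using d by simp
    ultimately show "x \<in> (\<lambda>k. \<alpha> ^ k) ` {..<d}" by blast
  qed
  then have "card (UNIV - {0::'K}) \<le> card ((\<lambda>k. \<alpha> ^ k) ` {..<d})"
    by (intro card_mono) auto
  also have "\<dots> \<le> d" using card_image_le[of "{..<d}" "\<lambda>k. \<alpha> ^ k"] by simp
  finally have "card (UNIV - {0::'K}) \<le> d" .
  moreover have "card (UNIV - {0::'K}) = n" using card_K by (simp add: card_Diff_singleton)
  ultimately show False using d by simp
qed

lemma alpha_eq_iff: "\<alpha> ^ x = \<alpha> ^ y \<longleftrightarrow> x mod n = y mod n"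
proof
  assume "\<alpha> ^ x = \<alpha> ^ y"
  then have "\<alpha> ^ (x mod n) = \<alpha> ^ (y mod n)" using alpha_mod[of x] alpha_mod[of y] by simp
  then show "x mod n = y mod n" using alpha_inj_lt n_pos by simp
next
  assume "x mod n = y mod n"
  then show "\<alpha> ^ x = \<alpha> ^ y" using alpha_mod[of x] alpha_mod[of y] by simp
qed

lemma char_K: "prime CHAR('K) \<and> (\<exists>k. q = CHAR('K) ^ k)"
proof -
  obtain p k where pk: "prime p" "k > 0" "q = p ^ k" using q_pp by blast
  have cpos: "CHAR('K) > 0" by (rule finite_imp_CHAR_pos) simp
  have cp: "prime CHAR('K)" by (rule prime_CHAR_semidom[OF cpos])
  have "of_nat (q ^ m) = (0::'K)" using of_nat_card_zero[where 'K='K] card_K by simp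
  then have "CHAR('K) dvd q ^ m" by (simp only: of_nat_eq_0_iff_char_dvd)
  then have "CHAR('K) dvd p ^ (k * m)" using pk by (simp add: power_mult)
  then have "CHAR('K) dvd p" using cp prime_dvd_power by blast
  then have "CHAR('K) = p" using cp pk(1) primes_dvd_imp_eq by blast
  then show ?thesis using cp pk by blast
qed

lemma frob_add: "(x + y :: 'K) ^ q = x ^ q + y ^ q"
  using char_K freshmans_dream' by blast

lemma frob_sum: "(sum (f :: _ \<Rightarrow> 'K) A) ^ q = sum (\<lambda>i. f i ^ q) A"
  using char_K freshmans_dream_sum' by blast

abbreviation "F \<equiv> (subfield_q q :: 'K set)"

lemma F_iff: "x \<in> F \<longleftrightarrow> x ^ q = x" by (simp add: subfield_q_def)

lemma F_0: "0 \<in> F" using q1 by (simp add: F_iff)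
lemma F_1: "1 \<in> F" by (simp add: F_iff)
lemma F_add: "x \<in> F \<Longrightarrow> y \<in> F \<Longrightarrow> x + y \<in> F" by (simp add: F_iff frob_add)
lemma F_mult: "x \<in> F \<Longrightarrow> y \<in> F \<Longrightarrow> x * y \<in> F" by (simp add: F_iff power_mult_distrib)
lemma F_uminus: assumes "x \<in> F" shows "- x \<in> F"
proof -
  have "(x + - x) ^ q = x ^ q + (- x) ^ q" by (rule frob_add)
  then have "0 = x + (- x) ^ q" using q1 assms by (simp add: F_iff power_0_left)
  then show ?thesis by (simp add: F_iff add_eq_0_iff)
qed
lemma F_sum: "(\<And>i. i \<in> A \<Longrightarrow> f i \<in> F) \<Longrightarrow> sum f A \<in> F"
  by (induction A rule: infinite_finite_induct) (auto intro: F_0 F_add)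

lemma card_F: "card F = q"
proof (rule antisym)
  define P :: "'K poly" where "P = monom 1 q + [:0, -1:]"
  have degP: "degree P = q" unfolding P_def using q1 by (subst degree_add_eq_left) (auto simp: degree_monom_eq)
  then have "P \<noteq> 0" using q1 by auto
  have "F = {x. poly P x = 0}" unfolding P_def by (auto simp: F_iff poly_monom)
  then show "card F \<le> q" using card_poly_roots_bound[OF \<open>P \<noteq> 0\<close>] degP by simp
next
  have dvd: "(q - 1) dvd n"
  proof -
    have "[q = 1] (mod q - 1)" using q1 by (simp add: cong_def mod_if)
    then have "[q ^ m = 1 ^ m] (mod q - 1)" by (rule cong_pow)
    then have "[q ^ m = 1] (mod q - 1)" by simp
    then show ?thesis by (rule cong_to_1_nat)
  qed
  then obtain t where t: "n = (q - 1) * t" by blast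
  define g where "g = (\<lambda>j. \<alpha> ^ (t * j))"
  have gF: "g j \<in> F" for j
  proof -
    have "g j ^ q = \<alpha> ^ (t * j * q)" unfolding g_def by (simp add: power_mult)
    also have "t * j * q = t * j + n * j" using t q1
      by (cases q) (auto simp: algebra_simps)
    also have "\<alpha> ^ (t * j + n * j) = g j" unfolding g_def
      by (simp add: power_add power_mult alpha_n[simplified])
    finally show ?thesis by (simp add: F_iff)
  qed
  have ginj: "inj_on g {..<q - 1}"
  proof (rule inj_onI)
    fix i j assume i: "i \<in> {..<q - 1}" and j: "j \<in> {..<q - 1}" and e: "g i = g j"
    have ti: "t * i < n" using i t n_pos by (auto simp: mult.commute)
    have tj: "t * j < n" using j t n_pos by (auto simp: mult.commute)
    have "t * i = t * j" using alpha_inj_lt[OF ti tj] e unfolding g_def by simp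
    moreover have "t > 0" using t n_pos by (cases t) auto
    ultimately show "i = j" by simp
  qed
  have g0: "0 \<notin> g ` {..<q - 1}" unfolding g_def using gen_nz by auto
  have "insert 0 (g ` {..<q - 1}) \<subseteq> F" using gF F_0 by auto
  then have "card (insert 0 (g ` {..<q - 1})) \<le> card F" by (intro card_mono) auto
  moreover have "card (insert 0 (g ` {..<q - 1})) = q"
    using g0 card_image[OF ginj] q1 by simp
  ultimately show "q \<le> card F" by simp
qed

end

lemma pow_mod_shift:
  fixes q :: nat
  assumes q0: "0 < q"
  shows "q ^ (u + a * z) mod (q ^ a - 1) = q ^ u mod (q ^ a - 1)"
proof -
  have "[q ^ a = 1] (mod q ^ a - 1)"
  proof -
    have "q ^ a = (q ^ a - 1) + 1" using q0 by simp
    then have "q ^ a mod (q ^ a - 1) = ((q ^ a - 1) + 1) mod (q ^ a - 1)" by simp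
    also have "\<dots> = 1 mod (q ^ a - 1)" by (rule mod_add_self1)
    finally show ?thesis by (simp add: cong_def)
  qed
  then have "[(q ^ a) ^ z = 1 ^ z] (mod q ^ a - 1)" by (rule cong_pow)
  then have "[q ^ u * (q ^ a) ^ z = q ^ u * 1] (mod q ^ a - 1)" by (intro cong_mult) auto
  then show ?thesis by (simp add: cong_def power_add power_mult)
qed

lemma two_shift:
  fixes q :: nat
  assumes q0: "0 < q"
  shows "(q ^ (u + a * z) + q ^ (v + a * w)) mod (q ^ a - 1) = (q ^ u + q ^ v) mod (q ^ a - 1)"
proof -
  have "(q ^ (u + a * z) + q ^ (v + a * w)) mod (q ^ a - 1) =
        (q ^ (u + a * z) mod (q ^ a - 1) + q ^ (v + a * w) mod (q ^ a - 1)) mod (q ^ a - 1)"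
    by (rule mod_add_eq[symmetric])
  also have "\<dots> = (q ^ u mod (q ^ a - 1) + q ^ v mod (q ^ a - 1)) mod (q ^ a - 1)"
    using pow_mod_shift[OF q0] by simp
  also have "\<dots> = (q ^ u + q ^ v) mod (q ^ a - 1)" by (rule mod_add_eq)
  finally show ?thesis .
qed

lemma mod_eq_small:
  fixes x y r :: nat
  assumes "1 \<le> x" "x \<le> r" "1 \<le> y" "y \<le> r" "x mod r = y mod r"
  shows "x = y"
proof (cases "x = r")
  case True
  then have "y mod r = 0" using assms by simp
  then show ?thesis using assms True by (cases "y < r") auto
next
  case False
  then have xr: "x < r" using assms by simp
  show ?thesis
  proof (cases "y = r")
    case True
    then have "x mod r = 0" using assms by simp
    then show ?thesis using xr assms by simp
  next
    case False
    then show ?thesis using xr assms by simp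
  qed
qed

lemma two_pow_bound:
  fixes q :: nat
  assumes q: "2 < q" and u: "u < a" and v: "v < a"
  shows "q ^ u + q ^ v \<le> q ^ a - 1"
proof -
  have Q: "q ^ u \<le> q ^ (a - 1)" "q ^ v \<le> q ^ (a - 1)"
    using u v q by (auto intro: power_increasing)
  have "q ^ a = q * q ^ (a - 1)" using u by (cases a) auto
  moreover have "q ^ (a - 1) \<ge> 1" using q by simp
  ultimately have "3 * q ^ (a - 1) \<le> q ^ a" using q by simp
  then show ?thesis using Q \<open>q ^ (a - 1) \<ge> 1\<close> by linarith
qed

lemma two_pow_bound_strict:
  fixes q :: nat
  assumes q: "2 < q" and u: "u < m" and v: "v < m" and m: "2 \<le> m"
  shows "q ^ u + q ^ v < q ^ m - 1"
proof -
  have Q: "q ^ u \<le> q ^ (m - 1)" "q ^ v \<le> q ^ (m - 1)"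
    using u v q by (auto intro: power_increasing)
  have "q ^ m = q * q ^ (m - 1)" using u by (cases m) auto
  moreover have "q ^ (m - 1) \<ge> q ^ 1" using q m by (intro power_increasing) auto
  ultimately have "3 * q ^ (m - 1) \<le> q ^ m" "q ^ (m - 1) \<ge> 3" using q by simp_all
  then show ?thesis using Q by linarith
qed

lemma divmod_bounds:
  fixes x a b :: nat
  assumes "x < a * b"
  shows "x mod a < a" "x div a < b" "x = x mod a + a * (x div a)"
proof -
  have a: "a > 0" using assms by (cases a) auto
  show "x mod a < a" using a by simp
  show "x div a < b" using assms a by (simp add: div_less_iff_less_mult mult.commute)
  show "x = x mod a + a * (x div a)" by simp
qed

lemma lt_prod: fixes u z a b :: nat assumes "u < a" "z < b" shows "u + a * z < a * b"
proof -
  have "u + a * z < a + a * z" using assms by simp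
  also have "\<dots> = a * (z + 1)" by (simp add: algebra_simps)
  also have "\<dots> \<le> a * b" using assms by (intro mult_le_mono2) simp
  finally show ?thesis .
qed

locale comb =
  fixes q a b :: nat
  assumes q2: "2 < q" and apos: "0 < a" and b2: "2 \<le> b"
begin

abbreviation "P \<equiv> tri (a - 1)"
abbreviation "AA \<equiv> tri (a - 1) + 2 * a"

definition NN :: "nat \<Rightarrow> nat" where
  "NN k = (if k < P then b ^ 2 else if k < P + a then tri b else b)"

abbreviation "D \<equiv> {(k, t). k < AA \<and> t < NN k}"

definition ee :: "nat \<Rightarrow> nat \<Rightarrow> nat" where
  "ee k t = (if k < P then q ^ (fst (untri k) + a * (t div b)) + q ^ (snd (untri k) + 1 + a * (t mod b))
     else if k < P + a then q ^ ((k - P) + a * fst (untri t)) + q ^ ((k - P) + a * snd (untri t))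
     else q ^ ((k - P - a) + a * t))"

definition rho :: "nat \<Rightarrow> nat" where
  "rho k = (if k < P then q ^ fst (untri k) + q ^ (snd (untri k) + 1)
     else if k < P + a then q ^ (k - P) + q ^ (k - P)
     else q ^ (k - P - a))"

abbreviation "Sset \<equiv> {s. 0 < s \<and> s < q ^ (a * b) - 1 \<and> wt_q q s < 3}"

lemma q1: "1 < q" using q2 by simp

lemma untri_lt_P: "k < P \<Longrightarrow> fst (untri k) \<le> snd (untri k) \<and> snd (untri k) + 1 < a"
  using untri[of k] tp_bound[of "fst (untri k)" "snd (untri k)" "a - 1"] apos by auto

lemma untri_lt_tri: "t < tri b \<Longrightarrow> fst (untri t) \<le> snd (untri t) \<and> snd (untri t) < b"
  using untri[of t] tp_bound[of "fst (untri t)" "snd (untri t)" b] by auto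

lemma NN_mono: "k \<le> k' \<Longrightarrow> k' < AA \<Longrightarrow> NN k' \<le> NN k"
proof -
  assume "k \<le> k'"
  have "tri b \<le> b ^ 2" by (induction b) (auto simp: power2_eq_square)
  moreover have "b \<le> tri b" by (induction b) auto
  ultimately show ?thesis using \<open>k \<le> k'\<close> unfolding NN_def by auto
qed

lemma NN_pos: "0 < NN k"
  using b2 unfolding NN_def by (auto simp: tri_eq)

lemma rho_mod: "ee k t mod (q ^ a - 1) = rho k mod (q ^ a - 1)"
proof -
  have q0: "0 < q" using q2 by simp
  consider "k < P" | "P \<le> k" "k < P + a" | "P + a \<le> k" by linarith
  then show ?thesis
  proof cases
    case 1
    have e1: "ee k t = q ^ (fst (untri k) + a * (t div b)) + q ^ (snd (untri k) + 1 + a * (t mod b))"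
      unfolding ee_def using 1 by simp
    have r1: "rho k = q ^ fst (untri k) + q ^ (snd (untri k) + 1)"
      unfolding rho_def using 1 by simp
    show ?thesis unfolding e1 r1 by (rule two_shift[OF q0])
  next
    case 2
    have e1: "ee k t = q ^ ((k - P) + a * fst (untri t)) + q ^ ((k - P) + a * snd (untri t))"
      unfolding ee_def using 2 by simp
    have r1: "rho k = q ^ (k - P) + q ^ (k - P)"
      unfolding rho_def using 2 by simp
    show ?thesis unfolding e1 r1 by (rule two_shift[OF q0])
  next
    case 3
    have e1: "ee k t = q ^ ((k - P - a) + a * t)"
      unfolding ee_def using 3 by simp
    have r1: "rho k = q ^ (k - P - a)"
      unfolding rho_def using 3 by simp
    show ?thesis unfolding e1 r1 by (rule pow_mod_shift[OF q0])
  qed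
qed

lemma rho_bounds: "k < AA \<Longrightarrow> 1 \<le> rho k \<and> rho k \<le> q ^ a - 1"
proof -
  assume k: "k < AA"
  have "0 < rho k" unfolding rho_def using q2 by simp
  then have "1 \<le> rho k" by simp
  moreover have "rho k \<le> q ^ a - 1"
  proof -
    consider "k < P" | "P \<le> k" "k < P + a" | "P + a \<le> k" by linarith
    then show ?thesis
    proof cases
      case 1
      then show ?thesis unfolding rho_def
        using untri_lt_P[OF 1] two_pow_bound[OF q2, of "fst (untri k)" a "snd (untri k) + 1"] by simp
    next
      case 2
      then show ?thesis unfolding rho_def
        using two_pow_bound[OF q2, of "k - P" a "k - P"] by simp
    next
      case 3
      then have "k - P - a < a" using k by simp
      then have "q ^ (k - P - a) < q ^ a" using q2 by (intro power_strict_increasing) auto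
      then show ?thesis unfolding rho_def using 3 by simp
    qed
  qed
  ultimately show ?thesis by simp
qed

lemma rho_inj: "k < AA \<Longrightarrow> k' < AA \<Longrightarrow> rho k = rho k' \<Longrightarrow> k = k'"
proof -
  assume k: "k < AA" and k': "k' < AA" and e: "rho k = rho k'"
  have pair_eq: "k = k'" if "k < P" "k' < P" "q ^ fst (untri k) + q ^ (snd (untri k) + 1) =
        q ^ fst (untri k') + q ^ (snd (untri k') + 1)" for k k'
  proof -
    have "fst (untri k) = fst (untri k') \<and> snd (untri k) + 1 = snd (untri k') + 1"
      using pow2_inj[OF q2, of "fst (untri k)" "snd (untri k) + 1" "fst (untri k')" "snd (untri k') + 1"]
        untri_lt_P[OF that(1)] untri_lt_P[OF that(2)] that(3) by simp
    moreover have "tri (snd (untri k)) = tri (snd (untri k'))"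
      using \<open>fst (untri k) = fst (untri k') \<and> snd (untri k) + 1 = snd (untri k') + 1\<close> by simp
    moreover have "tri (snd (untri k)) + fst (untri k) = k" using untri[of k] by simp
    moreover have "tri (snd (untri k')) + fst (untri k') = k'" using untri[of k'] by simp
    ultimately show ?thesis by linarith
  qed
  have pd: False if "k < P" "P \<le> k'" "k' < P + a" "q ^ fst (untri k) + q ^ (snd (untri k) + 1) =
        q ^ (k' - P) + q ^ (k' - P)" for k k'
  proof -
    have "fst (untri k) = k' - P \<and> snd (untri k) + 1 = k' - P"
      using pow2_inj[OF q2, of "fst (untri k)" "snd (untri k) + 1" "k' - P" "k' - P"]
        untri_lt_P[OF that(1)] that(4) by simp
    then show False using untri_lt_P[OF that(1)] by simp
  qed
  have dd: "k = k'" if "P \<le> k" "P \<le> k'" "q ^ (k - P) + q ^ (k - P) = q ^ (k' - P) + q ^ (k' - P)" for k k'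
  proof -
    have "q ^ (k - P) = q ^ (k' - P)" using that(3) by simp
    then have "k - P = k' - P" using q2 by (simp add: power_inject_exp)
    then show ?thesis using that by simp
  qed
  have ll: "k = k'" if "P + a \<le> k" "P + a \<le> k'" "q ^ (k - P - a) = q ^ (k' - P - a)" for k k'
  proof -
    have "k - P - a = k' - P - a" using that(3) q2 by (simp add: power_inject_exp)
    then show ?thesis using that by simp
  qed
  have lt: False if "q ^ x = q ^ y + q ^ z" "y \<le> z" for x y z
    using pow_ne_pow2[OF q2 that(2), of x] that(1) by simp
  have lt2: False if "q ^ x = q ^ y + q ^ y" for x y
    using lt[of x y y] that by simp
  consider "k < P" | "P \<le> k" "k < P + a" | "P + a \<le> k" by linarith
  then show ?thesis
  proof cases
    case 1
    consider "k' < P" | "P \<le> k'" "k' < P + a" | "P + a \<le> k'" by linarith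
    then show ?thesis
    proof cases
      case 1 then show ?thesis using pair_eq \<open>k < P\<close> e unfolding rho_def by simp
    next
      case 2 then show ?thesis using pd[of k k'] \<open>k < P\<close> e unfolding rho_def by simp
    next
      case 3 then show ?thesis using lt[of "k' - P - a" "fst (untri k)" "snd (untri k) + 1"]
          untri_lt_P[OF \<open>k < P\<close>] \<open>k < P\<close> e unfolding rho_def by simp
    qed
  next
    case 2
    consider "k' < P" | "P \<le> k'" "k' < P + a" | "P + a \<le> k'" by linarith
    then show ?thesis
    proof cases
      case 1 then show ?thesis using pd[of k' k] 2 e unfolding rho_def by simp
    next
      case 2 then show ?thesis using dd[of k k'] \<open>P \<le> k\<close> \<open>k < P + a\<close> e unfolding rho_def by simp
    next
      case 3 then show ?thesis using lt2[of "k' - P - a" "k - P"] 2 e unfolding rho_def by simp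
    qed
  next
    case 3
    consider "k' < P" | "P \<le> k'" "k' < P + a" | "P + a \<le> k'" by linarith
    then show ?thesis
    proof cases
      case 1 then show ?thesis using lt[of "k - P - a" "fst (untri k')" "snd (untri k') + 1"]
          untri_lt_P[OF 1] 3 e unfolding rho_def by simp
    next
      case 2 then show ?thesis using lt2[of "k - P - a" "k' - P"] 3 e unfolding rho_def by simp
    next
      case 4: 3 then show ?thesis using ll[of k k'] 3 e unfolding rho_def by simp
    qed
  qed
qed

lemma rho_mod_inj:
  "k < AA \<Longrightarrow> k' < AA \<Longrightarrow> rho k mod (q ^ a - 1) = rho k' mod (q ^ a - 1) \<Longrightarrow> k = k'"
  using rho_bounds[of k] rho_bounds[of k'] mod_eq_small[of "rho k" "q ^ a - 1" "rho k'"] rho_inj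
  by blast

end

lemma wt_pow2':
  assumes q: "2 < q"
  shows "wt_q q (q ^ x + q ^ y) = 2"
proof (cases "x \<le> y")
  case True then show ?thesis by (rule wt_pow2[OF q])
next
  case False
  then have "wt_q q (q ^ y + q ^ x) = 2" by (intro wt_pow2[OF q]) simp
  then show ?thesis by (simp add: add.commute)
qed

lemma pow2_inj':
  fixes q :: nat
  assumes q: "2 < q" and e: "q ^ x + q ^ y = q ^ x' + q ^ y'"
  shows "(x = x' \<and> y = y') \<or> (x = y' \<and> y = x')"
proof -
  have sym: "q ^ x + q ^ y = q ^ y + q ^ x" for x y :: nat by simp
  consider "x \<le> y" "x' \<le> y'" | "x \<le> y" "y' \<le> x'" | "y \<le> x" "x' \<le> y'" | "y \<le> x" "y' \<le> x'"
    by linarith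
  then show ?thesis
  proof cases
    case 1 then show ?thesis using pow2_inj[OF q _ _ e] by blast
  next
    case 2 then show ?thesis using pow2_inj[OF q, of x y y' x'] e by (simp add: add.commute)
  next
    case 3 then show ?thesis using pow2_inj[OF q, of y x x' y'] e by (simp add: add.commute)
  next
    case 4 then show ?thesis using pow2_inj[OF q, of y x y' x'] e by (simp add: add.commute)
  qed
qed

context comb
begin

lemma m2: "2 \<le> a * b"
  using apos b2 by (metis mult_le_mono One_nat_def Suc_leI mult_1)

lemma pow_in_S: "x < a * b \<Longrightarrow> q ^ x \<in> Sset"
proof -
  assume x: "x < a * b"
  have "q ^ x + q ^ x < q ^ (a * b) - 1" by (rule two_pow_bound_strict[OF q2 x x m2])
  moreover have "0 < q ^ x" using q2 by simp
  ultimately show ?thesis using wt_pow[OF q1, of x] by simp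
qed

lemma pow2_in_S: "x < a * b \<Longrightarrow> y < a * b \<Longrightarrow> q ^ x + q ^ y \<in> Sset"
proof -
  assume x: "x < a * b" and y: "y < a * b"
  have "q ^ x + q ^ y < q ^ (a * b) - 1" by (rule two_pow_bound_strict[OF q2 x y m2])
  moreover have "0 < q ^ x" using q2 by simp
  ultimately show ?thesis using wt_pow2'[OF q2, of x y] by simp
qed

lemma ee_cases:
  "(k < P \<and> ee k t = q ^ (fst (untri k) + a * (t div b)) + q ^ (snd (untri k) + 1 + a * (t mod b))) \<or>
   (P \<le> k \<and> k < P + a \<and> ee k t = q ^ ((k - P) + a * fst (untri t)) + q ^ ((k - P) + a * snd (untri t))) \<or>
   (P + a \<le> k \<and> ee k t = q ^ ((k - P - a) + a * t))"
  unfolding ee_def by auto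

lemma ee_in_S:
  assumes kt: "(k, t) \<in> D"
  shows "ee k t \<in> Sset"
proof -
  have k: "k < AA" and t: "t < NN k" using kt by auto
  consider "k < P" | "P \<le> k" "k < P + a" | "P + a \<le> k" by linarith
  then show ?thesis
  proof cases
    case 1
    have tb: "t < b * b" using t 1 unfolding NN_def by (simp add: power2_eq_square)
    have u: "fst (untri k) < a" "snd (untri k) + 1 < a" using untri_lt_P[OF 1] by auto
    have "t div b < b" using divmod_bounds(2)[OF tb] .
    moreover have "t mod b < b" using b2 by simp
    ultimately have x: "fst (untri k) + a * (t div b) < a * b" and y: "snd (untri k) + 1 + a * (t mod b) < a * b"
      using lt_prod u by blast+
    have "ee k t = q ^ (fst (untri k) + a * (t div b)) + q ^ (snd (untri k) + 1 + a * (t mod b))"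
      using ee_cases[of k t] 1 by auto
    then show ?thesis using pow2_in_S[OF x y] by simp
  next
    case 2
    have tb: "t < tri b" using t 2 unfolding NN_def by simp
    have "fst (untri t) < b" "snd (untri t) < b" using untri_lt_tri[OF tb] by auto
    moreover have "k - P < a" using 2 by simp
    ultimately have x: "(k - P) + a * fst (untri t) < a * b" and y: "(k - P) + a * snd (untri t) < a * b"
      using lt_prod by blast+
    have "ee k t = q ^ ((k - P) + a * fst (untri t)) + q ^ ((k - P) + a * snd (untri t))"
      using ee_cases[of k t] 2 by auto
    then show ?thesis using pow2_in_S[OF x y] by simp
  next
    case 3
    have tb: "t < b" using t 3 unfolding NN_def by simp
    have "k - P - a < a" using 3 k by simp
    then have x: "(k - P - a) + a * t < a * b" using lt_prod tb by blast
    have "ee k t = q ^ ((k - P - a) + a * t)"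
      using ee_cases[of k t] 3 by auto
    then show ?thesis using pow_in_S[OF x] by simp
  qed
qed

lemma ee_inj:
  assumes kt: "(k, t) \<in> D" and kt': "(k', t') \<in> D" and e: "ee k t = ee k' t'"
  shows "k = k' \<and> t = t'"
proof -
  have k: "k < AA" and t: "t < NN k" using kt by auto
  have k': "k' < AA" and t': "t' < NN k'" using kt' by auto
  have "rho k mod (q ^ a - 1) = rho k' mod (q ^ a - 1)"
    using rho_mod[of k t] rho_mod[of k' t'] e by simp
  then have kk: "k = k'" using rho_mod_inj k k' by blast
  have "t = t'"
  proof -
    consider "k < P" | "P \<le> k" "k < P + a" | "P + a \<le> k" by linarith
    then show ?thesis
    proof cases
      case 1
      define u where "u = fst (untri k)"
      define v where "v = snd (untri k) + 1"
      have uv: "u < v" "v < a" using untri_lt_P[OF 1] unfolding u_def v_def by auto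
      have eq: "q ^ (u + a * (t div b)) + q ^ (v + a * (t mod b)) =
                q ^ (u + a * (t' div b)) + q ^ (v + a * (t' mod b))"
        using e kk 1 unfolding ee_def u_def v_def by simp
      from pow2_inj'[OF q2 eq]
      show ?thesis
      proof
        assume h: "u + a * (t div b) = u + a * (t' div b) \<and> v + a * (t mod b) = v + a * (t' mod b)"
        then have "t div b = t' div b" "t mod b = t' mod b" using apos by auto
        then show ?thesis by (metis div_mult_mod_eq)
      next
        assume h: "u + a * (t div b) = v + a * (t' mod b) \<and> v + a * (t mod b) = u + a * (t' div b)"
        then have "(u + a * (t div b)) mod a = (v + a * (t' mod b)) mod a" by simp
        then have "u = v" using uv by simp
        then show ?thesis using uv by simp
      qed
    next
      case 2
      have tb: "t < tri b" using t 2 unfolding NN_def by simp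
      have tb': "t' < tri b" using t' 2 kk unfolding NN_def by simp
      define w where "w = k - P"
      have eq: "q ^ (w + a * fst (untri t)) + q ^ (w + a * snd (untri t)) =
                q ^ (w + a * fst (untri t')) + q ^ (w + a * snd (untri t'))"
        using e kk 2 unfolding ee_def w_def by simp
      have o1: "w + a * fst (untri t) \<le> w + a * snd (untri t)" using untri_lt_tri[OF tb] by simp
      have o2: "w + a * fst (untri t') \<le> w + a * snd (untri t')" using untri_lt_tri[OF tb'] by simp
      have "w + a * fst (untri t) = w + a * fst (untri t') \<and> w + a * snd (untri t) = w + a * snd (untri t')"
        by (rule pow2_inj[OF q2 o1 o2 eq])
      then have "fst (untri t) = fst (untri t')" "snd (untri t) = snd (untri t')" using apos by auto
      moreover have "tri (snd (untri t)) + fst (untri t) = t" using untri[of t] by simp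
      moreover have "tri (snd (untri t')) + fst (untri t') = t'" using untri[of t'] by simp
      ultimately show ?thesis by metis
    next
      case 3
      have "q ^ ((k - P - a) + a * t) = q ^ ((k - P - a) + a * t')"
        using e kk 3 unfolding ee_def by simp
      then have "(k - P - a) + a * t = (k - P - a) + a * t'" using q2 by (simp add: power_inject_exp)
      then show ?thesis using apos by simp
    qed
  qed
  then show ?thesis using kk by simp
qed

lemma exp_lt_m:
  assumes "q ^ y \<le> s" "s \<in> Sset"
  shows "y < a * b"
proof -
  have "s < q ^ (a * b) - 1" using assms by simp
  then have "q ^ y < q ^ (a * b)" using assms(1) by linarith
  then show ?thesis by (rule power_less_imp_less_exp[OF q1])
qed

lemma ee_surj:
  assumes s: "s \<in> Sset"
  shows "\<exists>k t. (k, t) \<in> D \<and> ee k t = s"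
proof -
  have "0 < s" "wt_q q s \<le> 2" using s by auto
  from wt_classify[OF q2 this]
  show ?thesis
  proof
    assume "\<exists>x. s = q ^ x"
    then obtain x where sx: "s = q ^ x" by blast
    have x: "x < a * b" using exp_lt_m[of x s] s sx by simp
    define k where "k = P + a + x mod a"
    define t where "t = x div a"
    have km: "k - P - a = x mod a" unfolding k_def by simp
    have "x mod a < a" "t < b" using divmod_bounds(1,2)[OF x] unfolding t_def by auto
    then have kt: "(k, t) \<in> D" unfolding k_def NN_def by auto
    have "ee k t = q ^ ((k - P - a) + a * t)" using ee_cases[of k t] k_def by auto
    also have "\<dots> = s" unfolding km t_def sx by simp
    finally show ?thesis using kt by blast
  next
    assume "\<exists>x y. x \<le> y \<and> s = q ^ x + q ^ y"
    then obtain x y where xy: "x \<le> y" and sxy: "s = q ^ x + q ^ y" by blast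
    have x: "x < a * b" using exp_lt_m[of x s] s sxy by simp
    have y: "y < a * b" using exp_lt_m[of y s] s sxy by simp
    define u where "u = x mod a"
    define v where "v = y mod a"
    define z where "z = x div a"
    define w where "w = y div a"
    have bx: "u < a" "z < b" "x = u + a * z"
      using divmod_bounds(1,2)[OF x] unfolding u_def z_def by auto
    have by': "v < a" "w < b" "y = v + a * w"
      using divmod_bounds(1,2)[OF y] unfolding v_def w_def by auto
    consider "u = v" | "u < v" | "v < u" by linarith
    then show ?thesis
    proof cases
      case 1
      have zw: "z \<le> w" unfolding z_def w_def using xy by (rule div_le_mono)
      define k where "k = P + u"
      define t where "t = tri w + z"
      have ut: "untri t = (z, w)" unfolding t_def by (rule untri_tp[OF zw])
      have tb: "t < tri b" unfolding t_def using tp_bound[OF zw, of b] by'(2) by simp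
      have kt: "(k, t) \<in> D" unfolding k_def NN_def using tb bx(1) by auto
      have "ee k t = q ^ ((k - P) + a * fst (untri t)) + q ^ ((k - P) + a * snd (untri t))"
        using ee_cases[of k t] k_def bx(1) by auto
      also have "\<dots> = s" unfolding ut k_def sxy using bx(3) by'(3) 1 by simp
      finally show ?thesis using kt by blast
    next
      case 2
      have uv: "u \<le> v - 1" using 2 by simp
      define k where "k = tri (v - 1) + u"
      define t where "t = z * b + w"
      have uk: "untri k = (u, v - 1)" unfolding k_def by (rule untri_tp[OF uv])
      have kP: "k < P" unfolding k_def using tp_bound[OF uv, of "a - 1"] by'(1) 2 by simp
      have tdiv: "t div b = z" "t mod b = w" unfolding t_def using by'(2) by auto
      have "w + b * z < b * b" by (rule lt_prod) (use bx(2) by'(2) in auto)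
      moreover have "t = w + b * z" unfolding t_def by simp
      ultimately have "t < b * b" by simp
      then have kt: "(k, t) \<in> D" using kP unfolding NN_def by (auto simp: power2_eq_square)
      have "ee k t = q ^ (fst (untri k) + a * (t div b)) + q ^ (snd (untri k) + 1 + a * (t mod b))"
        using ee_cases[of k t] kP by auto
      also have "\<dots> = s" unfolding uk tdiv sxy using bx(3) by'(3) 2 by simp
      finally show ?thesis using kt by blast
    next
      case 3
      have uv: "v \<le> u - 1" using 3 by simp
      define k where "k = tri (u - 1) + v"
      define t where "t = w * b + z"
      have uk: "untri k = (v, u - 1)" unfolding k_def by (rule untri_tp[OF uv])
      have kP: "k < P" unfolding k_def using tp_bound[OF uv, of "a - 1"] bx(1) 3 by simp
      have tdiv: "t div b = w" "t mod b = z" unfolding t_def using bx(2) by auto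
      have "z + b * w < b * b" by (rule lt_prod) (use bx(2) by'(2) in auto)
      moreover have "t = z + b * w" unfolding t_def by simp
      ultimately have "t < b * b" by simp
      then have kt: "(k, t) \<in> D" using kP unfolding NN_def by (auto simp: power2_eq_square)
      have "ee k t = q ^ (fst (untri k) + a * (t div b)) + q ^ (snd (untri k) + 1 + a * (t mod b))"
        using ee_cases[of k t] kP by auto
      also have "\<dots> = s" unfolding uk tdiv sxy using bx(3) by'(3) 3 by simp
      finally show ?thesis using kt by blast
    qed
  qed
qed

end

context grm
begin

sublocale comb q a b
  using q_gt a_pos b_ge2 by unfold_locales auto

lemma T_img: "T ` {..<n} = {..<r1} \<times> {..<r2}" using T_bij by (simp add: bij_betw_def)
lemma T_inj: "inj_on T {..<n}" using T_bij by (simp add: bij_betw_def)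

lemma T_range: "i < n \<Longrightarrow> fst (T i) < r1 \<and> snd (T i) < r2"
proof -
  assume "i < n"
  then have "T i \<in> {..<r1} \<times> {..<r2}" using T_img by blast
  then show ?thesis by (cases "T i") auto
qed

lemma T_0: "T 0 = (0, 0)"
proof -
  obtain f g where fg: "T 0 = (f, g)" by (cases "T 0")
  have "f < r1" "g < r2" using T_range[OF n_pos] fg by auto
  have "T ((0 + 0) mod n) = ((fst (T 0) + fst (T 0)) mod r1, (snd (T 0) + snd (T 0)) mod r2)"
    using T_hom n_pos by blast
  then have "(f, g) = ((f + f) mod r1, (g + g) mod r2)" using fg n_pos by simp
  then have e: "(f + f) mod r1 = f" "(g + g) mod r2 = g" by auto
  have "f = 0"
  proof (cases "f + f < r1")
    case True then show ?thesis using e by simp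
  next
    case False
    then have "(f + f) mod r1 = f + f - r1" using \<open>f < r1\<close> by (simp add: mod_if)
    then show ?thesis using e \<open>f < r1\<close> by simp
  qed
  moreover have "g = 0"
  proof (cases "g + g < r2")
    case True then show ?thesis using e by simp
  next
    case False
    then have "(g + g) mod r2 = g + g - r2" using \<open>g < r2\<close> by (simp add: mod_if)
    then show ?thesis using e \<open>g < r2\<close> by simp
  qed
  ultimately show ?thesis using fg by simp
qed

lemma T_mult:
  assumes i: "i < n"
  shows "T ((c * i) mod n) = ((c * fst (T i)) mod r1, (c * snd (T i)) mod r2)"
proof (induction c)
  case 0
  then show ?case using T_0 by simp
next
  case (Suc c)
  have "(Suc c * i) mod n = ((c * i) mod n + i) mod n"
    by (simp add: mod_add_left_eq mod_add_right_eq add.commute)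
  then have "T ((Suc c * i) mod n) =
     ((fst (T ((c * i) mod n)) + fst (T i)) mod r1, (snd (T ((c * i) mod n)) + snd (T i)) mod r2)"
    using T_hom i n_pos by simp
  also have "\<dots> = (((c * fst (T i)) mod r1 + fst (T i)) mod r1, ((c * snd (T i)) mod r2 + snd (T i)) mod r2)"
    using Suc.IH by simp
  also have "\<dots> = ((Suc c * fst (T i)) mod r1, (Suc c * snd (T i)) mod r2)"
    by (simp add: mod_add_left_eq mod_add_right_eq add.commute)
  finally show ?case .
qed

definition "i1 = (SOME i. i < n \<and> T i = (1, 0))"
definition "i2 = (SOME i. i < n \<and> T i = (0, 1))"

lemma i1: "i1 < n \<and> T i1 = (1, 0)"
proof -
  have "(1, 0) \<in> T ` {..<n}" using T_img r1_gt r2_gt by auto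
  then have "\<exists>i. i < n \<and> T i = (1, 0)" by auto
  then show ?thesis unfolding i1_def by (rule someI_ex)
qed

lemma i2: "i2 < n \<and> T i2 = (0, 1)"
proof -
  have "(0, 1) \<in> T ` {..<n}" using T_img r1_gt r2_gt by auto
  then have "\<exists>i. i < n \<and> T i = (0, 1)" by auto
  then show ?thesis unfolding i2_def by (rule someI_ex)
qed

lemma T_decomp:
  assumes i: "i < n" and Ti: "T i = (j1, j2)"
  shows "i = (j1 * i1 + j2 * i2) mod n"
proof -
  have j: "j1 < r1" "j2 < r2" using T_range[OF i] Ti by auto
  have x: "T ((j1 * i1) mod n) = (j1 mod r1, 0)" using T_mult[of i1 j1] i1 by simp
  have y: "T ((j2 * i2) mod n) = (0, j2 mod r2)" using T_mult[of i2 j2] i2 by simp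
  have "(j1 * i1 + j2 * i2) mod n = ((j1 * i1) mod n + (j2 * i2) mod n) mod n"
    by (simp add: mod_add_eq)
  then have "T ((j1 * i1 + j2 * i2) mod n) = ((j1 mod r1 + 0) mod r1, (0 + j2 mod r2) mod r2)"
    using T_hom x y n_pos by simp
  also have "\<dots> = (j1, j2)" using j by simp
  finally have "T ((j1 * i1 + j2 * i2) mod n) = T i" using Ti by simp
  moreover have "(j1 * i1 + j2 * i2) mod n < n" using n_pos by simp
  ultimately show ?thesis using T_inj i by (auto dest: inj_onD)
qed

definition "beta = \<alpha> ^ i1"
definition "gamma = \<alpha> ^ i2"

lemma alpha_split:
  assumes i: "i < n" and Ti: "T i = (j1, j2)"
  shows "\<alpha> ^ (i * s) = (beta ^ s) ^ j1 * (gamma ^ s) ^ j2"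
proof -
  have "(i * s) mod n = ((j1 * i1 + j2 * i2) * s) mod n"
    using T_decomp[OF i Ti] by (metis mod_mult_left_eq)
  then have "\<alpha> ^ (i * s) = \<alpha> ^ ((j1 * i1 + j2 * i2) * s)" using alpha_eq_iff by blast
  also have "\<dots> = (beta ^ s) ^ j1 * (gamma ^ s) ^ j2"
    unfolding beta_def gamma_def by (simp add: algebra_simps power_add flip: power_mult)
  finally show ?thesis .
qed

lemma beta_eq: "beta ^ x = beta ^ y \<longleftrightarrow> x mod r1 = y mod r1"
proof -
  have "beta ^ x = beta ^ y \<longleftrightarrow> (x * i1) mod n = (y * i1) mod n"
    unfolding beta_def using alpha_eq_iff by (simp add: mult.commute flip: power_mult)
  also have "\<dots> \<longleftrightarrow> T ((x * i1) mod n) = T ((y * i1) mod n)"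
    using T_inj n_pos by (auto dest: inj_onD)
  also have "\<dots> \<longleftrightarrow> x mod r1 = y mod r1"
    using T_mult[of i1 x] T_mult[of i1 y] i1 by simp
  finally show ?thesis .
qed

lemma gamma_eq: "gamma ^ x = gamma ^ y \<longleftrightarrow> x mod r2 = y mod r2"
proof -
  have "gamma ^ x = gamma ^ y \<longleftrightarrow> (x * i2) mod n = (y * i2) mod n"
    unfolding gamma_def using alpha_eq_iff by (simp add: mult.commute flip: power_mult)
  also have "\<dots> \<longleftrightarrow> T ((x * i2) mod n) = T ((y * i2) mod n)"
    using T_inj n_pos by (auto dest: inj_onD)
  also have "\<dots> \<longleftrightarrow> x mod r2 = y mod r2"
    using T_mult[of i2 x] T_mult[of i2 y] i2 by simp
  finally show ?thesis .
qed

end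

context grm
begin

lemma m_eq: "m = a * b" by (rule m_ab)

lemma tri_ge: "b \<le> tri b" by (induction b) auto
lemma tri_le_sq: "tri b \<le> b ^ 2" by (induction b) (auto simp: power2_eq_square)

lemma Gamma_eq: "Gamma_set a b = D"
proof -
  have h1: "a * (a - 1) div 2 = P" using a_pos by (simp add: tri_eq mult.commute)
  have e2: "a * (a + 1) = a * (a - 1) + 2 * a" using a_pos by (cases a) (auto simp: algebra_simps)
  have h2: "a * (a + 1) div 2 = P + a" using h1 e2 by simp
  have e3: "a * (a + 3) = a * (a - 1) + 2 * (2 * a)" using a_pos by (cases a) (auto simp: algebra_simps)
  have h3: "a * (a + 3) div 2 = P + 2 * a" using h1 e3 by simp
  have h4: "b * (b + 1) div 2 = tri b" by (simp add: tri_eq)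
  show ?thesis
    unfolding Gamma_set_def h1 h2 h3 h4 NN_def using tri_ge tri_le_sq by (auto split: if_split_asm)
qed

lemma AA_le: "AA \<le> r1"
proof -
  have "inj_on rho {..<AA}" using rho_inj by (auto intro: inj_onI)
  moreover have "rho ` {..<AA} \<subseteq> {1..q ^ a - 1}" using rho_bounds by auto
  then have "card (rho ` {..<AA}) \<le> card {1..q ^ a - 1}" by (intro card_mono) auto
  ultimately have "card {..<AA} \<le> card {1..q ^ a - 1}"
    using card_image by fastforce
  then show ?thesis using r1_def by simp
qed

lemma n_eq: "n = r1 * r2" by (rule n_fact)

lemma ee_lt_n: "(k, t) \<in> D \<Longrightarrow> ee k t < n"
  using ee_in_S[of k t] m_eq by simp

lemma NN_le: "k < AA \<Longrightarrow> NN k \<le> r2"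
proof -
  assume k: "k < AA"
  let ?f = "\<lambda>t. ee k t div r1"
  have "inj_on ?f {..<NN k}"
  proof (rule inj_onI)
    fix t t' assume t: "t \<in> {..<NN k}" and t': "t' \<in> {..<NN k}" and e: "?f t = ?f t'"
    have "ee k t mod r1 = ee k t' mod r1" using rho_mod[of k t] rho_mod[of k t'] r1_def by simp
    then have "ee k t = ee k t'" using e by (metis div_mult_mod_eq)
    then show "t = t'" using ee_inj[of k t k t'] t t' k by auto
  qed
  moreover have "?f ` {..<NN k} \<subseteq> {..<r2}"
  proof
    fix x assume "x \<in> ?f ` {..<NN k}"
    then obtain t where t: "t < NN k" "x = ?f t" by auto
    have "ee k t < r1 * r2" using ee_lt_n[of k t] t k n_eq by simp
    then show "x \<in> {..<r2}" using t r1_gt by (simp add: div_less_iff_less_mult mult.commute)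
  qed
  then have "card (?f ` {..<NN k}) \<le> card {..<r2}" by (intro card_mono) auto
  ultimately have "card {..<NN k} \<le> card {..<r2}"
    using card_image by fastforce
  then show ?thesis by simp
qed

lemma D_range: "(k, t) \<in> D \<Longrightarrow> k < r1 \<and> t < r2"
  using AA_le NN_le[of k] by auto

abbreviation "J \<equiv> {i \<in> {..<n}. T i \<in> Gamma_set a b}"

lemma finite_D: "finite D"
proof -
  have "D \<subseteq> {..<r1} \<times> {..<r2}" using D_range by auto
  then show ?thesis by (rule finite_subset) auto
qed

lemma D_Sigma: "D = Sigma {..<AA} (\<lambda>k. {..<NN k})" by auto

lemma bij_T: "bij_betw T J D"
proof -
  have "inj_on T J" using T_inj by (rule inj_on_subset) auto
  moreover have "T ` J = D"
  proof
    show "T ` J \<subseteq> D" using Gamma_eq by auto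
    show "D \<subseteq> T ` J"
    proof
      fix x assume x: "x \<in> D"
      then have "x \<in> {..<r1} \<times> {..<r2}" using D_range by (cases x) auto
      then have "x \<in> T ` {..<n}" using T_img by simp
      then obtain i where "i < n" "T i = x" by blast
      then show "x \<in> T ` J" using x Gamma_eq by auto
    qed
  qed
  ultimately show ?thesis by (simp add: bij_betw_def)
qed

lemma bij_ee: "bij_betw (\<lambda>(k, t). ee k t) D Sset"
proof -
  have "inj_on (\<lambda>(k, t). ee k t) D"
    by (rule inj_onI) (use ee_inj in auto)
  moreover have "(\<lambda>(k, t). ee k t) ` D = Sset"
  proof
    show "(\<lambda>(k, t). ee k t) ` D \<subseteq> Sset" using ee_in_S by auto
    show "Sset \<subseteq> (\<lambda>(k, t). ee k t) ` D"
    proof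
      fix s assume "s \<in> Sset"
      then obtain k t where "(k, t) \<in> D" "ee k t = s" using ee_surj by blast
      then show "s \<in> (\<lambda>(k, t). ee k t) ` D" by force
    qed
  qed
  ultimately show ?thesis by (simp add: bij_betw_def)
qed

lemma card_JS: "card Sset = card J"
  using bij_betw_same_card[OF bij_T] bij_betw_same_card[OF bij_ee] by simp

lemma finite_S: "finite Sset" by (rule finite_subset[of _ "{..<q ^ (a * b)}"]) auto

lemma finite_J: "finite J" by simp

lemma KC:
  assumes h: "\<forall>j\<in>J. (\<Sum>s\<in>Sset. lam s * \<alpha> ^ (j * s)) = 0"
  shows "\<forall>s\<in>Sset. lam s = 0"
proof -
  define Bv where "Bv k = beta ^ rho k" for k
  define Cv where "Cv k t = gamma ^ ee k t" for k t
  define L where "L k t = lam (ee k t)" for k t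
  have main: "\<forall>k<AA. \<forall>t<NN k. L k t = 0"
  proof (rule alg[where Bv = Bv and Cv = Cv])
    fix k k' assume k: "k < AA" "k' < AA" "k \<noteq> k'"
    show "Bv k \<noteq> Bv k'"
    proof
      assume "Bv k = Bv k'"
      then have "rho k mod r1 = rho k' mod r1" unfolding Bv_def using beta_eq by simp
      then show False using rho_mod_inj[of k k'] k r1_def by simp
    qed
  next
    fix k t t' assume k: "k < AA" and t: "t < NN k" "t' < NN k" "t \<noteq> t'"
    show "Cv k t \<noteq> Cv k t'"
    proof
      assume "Cv k t = Cv k t'"
      then have m2: "[ee k t = ee k t'] (mod r2)" unfolding Cv_def using gamma_eq by (simp add: cong_def)
      have m1: "[ee k t = ee k t'] (mod r1)"
        using rho_mod[of k t] rho_mod[of k t'] r1_def by (simp add: cong_def)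
      have "[ee k t = ee k t'] (mod r1 * r2)" by (rule coprime_cong_mult_nat[OF m1 m2 coprime])
      moreover have "ee k t < r1 * r2" "ee k t' < r1 * r2"
        using ee_lt_n[of k t] ee_lt_n[of k t'] k t n_eq by auto
      ultimately have "ee k t = ee k t'" by (simp add: cong_def)
      then show False using ee_inj[of k t k t'] k t by auto
    qed
  next
    fix k k' :: nat assume "k \<le> k'" "k' < AA"
    then show "NN k' \<le> NN k" by (rule NN_mono)
  next
    fix j1 j2 assume j1: "j1 < AA" and j2: "j2 < NN j1"
    have jD: "(j1, j2) \<in> D" using j1 j2 by simp
    then have "(j1, j2) \<in> T ` J" using bij_betw_imp_surj_on[OF bij_T] by simp
    then obtain j where j: "j \<in> J" "(j1, j2) = T j" by (rule imageE)
    then have j: "j \<in> J" "T j = (j1, j2)" by auto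
    have jn: "j < n" using j by simp
    have "0 = (\<Sum>s\<in>Sset. lam s * \<alpha> ^ (j * s))" using h j by simp
    also have "\<dots> = (\<Sum>x\<in>D. lam ((\<lambda>(k, t). ee k t) x) * \<alpha> ^ (j * (\<lambda>(k, t). ee k t) x))"
      using sum.reindex_bij_betw[OF bij_ee, of "\<lambda>s. lam s * \<alpha> ^ (j * s)"] by simp
    also have "\<dots> = (\<Sum>x\<in>D. (\<lambda>(k, t). L k t * Bv k ^ j1 * Cv k t ^ j2) x)"
    proof (rule sum.cong[OF refl])
      fix x assume x: "x \<in> D"
      obtain k t where kt: "x = (k, t)" by (cases x)
      have "\<alpha> ^ (j * ee k t) = (beta ^ ee k t) ^ j1 * (gamma ^ ee k t) ^ j2"
        by (rule alpha_split[OF jn j(2)])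
      moreover have "beta ^ ee k t = beta ^ rho k"
        using beta_eq rho_mod[of k t] r1_def by simp
      ultimately show "lam ((\<lambda>(k, t). ee k t) x) * \<alpha> ^ (j * (\<lambda>(k, t). ee k t) x) =
          (\<lambda>(k, t). L k t * Bv k ^ j1 * Cv k t ^ j2) x"
        unfolding kt L_def Bv_def Cv_def by (simp add: mult.assoc)
    qed
    also have "\<dots> = (\<Sum>k<AA. \<Sum>t<NN k. L k t * Bv k ^ j1 * Cv k t ^ j2)"
      unfolding D_Sigma by (rule sum.Sigma[symmetric]) auto
    finally show "(\<Sum>k<AA. \<Sum>t<NN k. L k t * Bv k ^ j1 * Cv k t ^ j2) = 0" by simp
  qed
  show ?thesis
  proof
    fix s assume "s \<in> Sset"
    then obtain k t where "(k, t) \<in> D" "ee k t = s" using ee_surj by blast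
    then show "lam s = 0" using main unfolding L_def by auto
  qed
qed

end

context grm
begin

lemma ab_m [simp]: "a * b = m" using m_ab by simp

abbreviation "Cd \<equiv> punctured_GRM q m (m * (q - 1) - 3) \<alpha>"
abbreviation "I \<equiv> {..<n} - J"

lemma thr: "m * (q - 1) - (m * (q - 1) - 3) = 3"
proof -
  have "2 \<le> m" using m2 by simp
  moreover have "2 \<le> q - 1" using q_gt by simp
  ultimately have "4 \<le> m * (q - 1)" using mult_le_mono[of 2 m 2 "q - 1"] by simp
  then show ?thesis by simp
qed

lemma S_iff: "s \<in> Sset \<longleftrightarrow> 0 < s \<and> s < n \<and> wt_q q s < 3"
  by simp

lemma C_iff: "c \<in> Cd \<longleftrightarrow> (\<forall>i<n. c i \<in> F) \<and> (\<forall>i\<ge>n. c i = 0) \<and>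
    (\<forall>s\<in>Sset. (\<Sum>i<n. c i * \<alpha> ^ (i * s)) = 0)"
proof
  assume c: "c \<in> Cd"
  then have c1: "\<forall>i<n. c i \<in> F" "\<forall>i\<ge>n. c i = 0" unfolding punctured_GRM_def by auto
  from c obtain b0 where b0: "\<forall>s<n. wt_q q s < 3 \<longrightarrow> b0 * 0 ^ s + (\<Sum>i<n. c i * \<alpha> ^ (i * s)) = 0"
    unfolding punctured_GRM_def thr by auto
  have "\<forall>s\<in>Sset. (\<Sum>i<n. c i * \<alpha> ^ (i * s)) = 0"
  proof
    fix s assume "s \<in> Sset"
    then have s: "0 < s" "s < n" "wt_q q s < 3" using S_iff by auto
    have "b0 * 0 ^ s + (\<Sum>i<n. c i * \<alpha> ^ (i * s)) = 0" using b0 s by blast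
    then show "(\<Sum>i<n. c i * \<alpha> ^ (i * s)) = 0" using s by (simp add: power_0_left)
  qed
  then show "(\<forall>i<n. c i \<in> F) \<and> (\<forall>i\<ge>n. c i = 0) \<and>
    (\<forall>s\<in>Sset. (\<Sum>i<n. c i * \<alpha> ^ (i * s)) = 0)" using c1 by simp
next
  assume c: "(\<forall>i<n. c i \<in> F) \<and> (\<forall>i\<ge>n. c i = 0) \<and>
    (\<forall>s\<in>Sset. (\<Sum>i<n. c i * \<alpha> ^ (i * s)) = 0)"
  define b0 where "b0 = - (\<Sum>i<n. c i)"
  have b0F: "b0 \<in> F" unfolding b0_def using c by (intro F_uminus F_sum) auto
  have "\<forall>s<n. wt_q q s < 3 \<longrightarrow> b0 * 0 ^ s + (\<Sum>i<n. c i * \<alpha> ^ (i * s)) = 0"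
  proof (intro allI impI)
    fix s assume s: "s < n" "wt_q q s < 3"
    show "b0 * 0 ^ s + (\<Sum>i<n. c i * \<alpha> ^ (i * s)) = 0"
    proof (cases "s = 0")
      case True
      then show ?thesis unfolding b0_def by simp
    next
      case False
      then have "s \<in> Sset" using S_iff s by simp
      then show ?thesis using c False by simp
    qed
  qed
  then show "c \<in> Cd" unfolding punctured_GRM_def thr using c b0F by auto
qed

lemma coprime_qn: "coprime q n"
proof -
  have "coprime (q ^ m) (q ^ m - 1)" using q1 by (intro coprime_diff_one_right_nat) simp
  then show ?thesis using m_pos by simp
qed

lemma pow_mod_n_S: "x < a * b \<Longrightarrow> y < a * b \<Longrightarrow> (q ^ Suc x + q ^ Suc y) mod n \<in> Sset"
proof -
  assume x: "x < a * b" and y: "y < a * b"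
  have q0: "0 < q" using q1 by simp
  have mm: "0 < m" using m_pos by simp
  have ex: "q ^ Suc x = q ^ (Suc x mod m + m * (Suc x div m))" by simp
  have ey: "q ^ Suc y = q ^ (Suc y mod m + m * (Suc y div m))" by simp
  have "(q ^ Suc x + q ^ Suc y) mod n = (q ^ (Suc x mod m + m * (Suc x div m)) + q ^ (Suc y mod m + m * (Suc y div m))) mod n"
    by (simp only: ex ey)
  also have "\<dots> = (q ^ (Suc x mod m) + q ^ (Suc y mod m)) mod n" by (rule two_shift[OF q0])
  also have "\<dots> = q ^ (Suc x mod m) + q ^ (Suc y mod m)"
  proof -
    have "q ^ (Suc x mod m) + q ^ (Suc y mod m) \<in> Sset"
      using pow2_in_S[of "Suc x mod m" "Suc y mod m"] mm by simp
    then show ?thesis using S_iff by simp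
  qed
  finally show ?thesis using pow2_in_S[of "Suc x mod m" "Suc y mod m"] mm by simp
qed

lemma pow_mod_n_S1: "x < a * b \<Longrightarrow> (q ^ Suc x) mod n \<in> Sset"
proof -
  assume x: "x < a * b"
  have q0: "0 < q" using q1 by simp
  have mm: "0 < m" using m_pos by simp
  have ex: "q ^ Suc x = q ^ (Suc x mod m + m * (Suc x div m))" by simp
  have "(q ^ Suc x) mod n = q ^ (Suc x mod m + m * (Suc x div m)) mod n"
    by (simp only: ex)
  also have "\<dots> = q ^ (Suc x mod m) mod n" by (rule pow_mod_shift[OF q0])
  also have "\<dots> = q ^ (Suc x mod m)"
  proof -
    have "q ^ (Suc x mod m) \<in> Sset" using pow_in_S[of "Suc x mod m"] mm by simp
    then show ?thesis using S_iff by simp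
  qed
  finally show ?thesis using pow_in_S[of "Suc x mod m"] mm by simp
qed

lemma sig_S: "s \<in> Sset \<Longrightarrow> (q * s) mod n \<in> Sset"
proof -
  assume s: "s \<in> Sset"
  have "0 < s" "wt_q q s \<le> 2" using s by auto
  from wt_classify[OF q_gt this]
  show ?thesis
  proof
    assume "\<exists>x. s = q ^ x"
    then obtain x where sx: "s = q ^ x" by blast
    have "x < a * b" using exp_lt_m[of x s] s sx by simp
    then show ?thesis using pow_mod_n_S1 sx by simp
  next
    assume "\<exists>x y. x \<le> y \<and> s = q ^ x + q ^ y"
    then obtain x y where sxy: "s = q ^ x + q ^ y" by blast
    have "x < a * b" using exp_lt_m[of x s] s sxy by simp
    moreover have "y < a * b" using exp_lt_m[of y s] s sxy by simp
    moreover have "q * s = q ^ Suc x + q ^ Suc y" using sxy by (simp add: algebra_simps)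
    ultimately show ?thesis using pow_mod_n_S by simp
  qed
qed

lemma sig_surj: "(\<lambda>s. (q * s) mod n) ` Sset = Sset"
proof (rule endo_inj_surj[OF finite_S])
  show "(\<lambda>s. (q * s) mod n) ` Sset \<subseteq> Sset" using sig_S by auto
  show "inj_on (\<lambda>s. (q * s) mod n) Sset"
  proof (rule inj_onI)
    fix s s' assume s: "s \<in> Sset" and s': "s' \<in> Sset" and e: "(q * s) mod n = (q * s') mod n"
    then have "[q * s = q * s'] (mod n)" by (simp add: cong_def)
    then have "[s = s'] (mod n)" using cong_mult_lcancel_nat[OF coprime_qn] by blast
    moreover have "s < n" "s' < n" using s s' S_iff by auto
    ultimately show "s = s'" by (simp add: cong_def)
  qed
qed

lemma neg_frob: "(- x :: 'K) ^ q = - (x ^ q)"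
proof -
  have "(x + - x) ^ q = x ^ q + (- x) ^ q" by (rule frob_add)
  then have "0 = x ^ q + (- x) ^ q" using q1 by (simp add: power_0_left)
  then show ?thesis by (simp add: eq_neg_iff_add_eq_0 add.commute)
qed

lemma J_sub: "J \<subseteq> {..<n}" by auto

lemma sum_split: "(\<Sum>i<n. f i) = (\<Sum>i\<in>I. f i) + (\<Sum>i\<in>J. f i)"
  using sum.subset_diff[OF J_sub, of f] by simp

lemma uniq_J:
  assumes "\<forall>s\<in>Sset. (\<Sum>j\<in>J. d j * \<alpha> ^ (j * s)) = 0"
  shows "\<forall>j\<in>J. d j = 0"
  by (rule sq_uniq[of Sset J "\<lambda>s j. \<alpha> ^ (j * s)", OF finite_S finite_J card_JS KC assms])

lemma ext:
  assumes v: "\<forall>i\<in>I. v i \<in> F"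
  shows "\<exists>c\<in>Cd. \<forall>i\<in>I. c i = v i"
proof -
  define w where "w s = - (\<Sum>i\<in>I. v i * \<alpha> ^ (i * s))" for s
  obtain c0 where c0: "\<forall>s\<in>Sset. (\<Sum>j\<in>J. c0 j * \<alpha> ^ (j * s)) = w s"
    using sq_exist[of Sset J "\<lambda>s j. \<alpha> ^ (j * s)", OF finite_S finite_J card_JS KC] by blast
  have c0F: "\<forall>j\<in>J. c0 j \<in> F"
  proof -
    define c1 where "c1 j = c0 j ^ q" for j
    have c1: "\<forall>s'\<in>Sset. (\<Sum>j\<in>J. c1 j * \<alpha> ^ (j * s')) = w s'"
    proof
      fix s' assume "s' \<in> Sset"
      then obtain s where s: "s \<in> Sset" and s': "s' = (q * s) mod n" using sig_surj by blast
      have ap: "\<alpha> ^ (j * s') = (\<alpha> ^ (j * s)) ^ q" for j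
      proof -
        have "(j * s') mod n = (j * (q * s)) mod n" unfolding s' by (simp add: mod_mult_right_eq)
        then have "\<alpha> ^ (j * s') = \<alpha> ^ (j * (q * s))" using alpha_eq_iff by blast
        moreover have "j * (q * s) = (j * s) * q" by simp
        ultimately show ?thesis by (simp only: power_mult)
      qed
      have "(\<Sum>j\<in>J. c1 j * \<alpha> ^ (j * s')) = (\<Sum>j\<in>J. (c0 j * \<alpha> ^ (j * s)) ^ q)"
        unfolding c1_def ap by (simp add: power_mult_distrib)
      also have "\<dots> = (\<Sum>j\<in>J. c0 j * \<alpha> ^ (j * s)) ^ q" by (rule frob_sum[symmetric])
      also have "\<dots> = (w s) ^ q" using c0 s by simp
      also have "\<dots> = - ((\<Sum>i\<in>I. v i * \<alpha> ^ (i * s)) ^ q)" unfolding w_def by (rule neg_frob)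
      also have "(\<Sum>i\<in>I. v i * \<alpha> ^ (i * s)) ^ q = (\<Sum>i\<in>I. (v i * \<alpha> ^ (i * s)) ^ q)"
        by (rule frob_sum)
      also have "\<dots> = (\<Sum>i\<in>I. v i * \<alpha> ^ (i * s'))"
      proof (rule sum.cong[OF refl])
        fix i assume "i \<in> I"
        then have "v i ^ q = v i" using v F_iff by blast
        then show "(v i * \<alpha> ^ (i * s)) ^ q = v i * \<alpha> ^ (i * s')"
          using ap[of i] by (simp add: power_mult_distrib)
      qed
      finally show "(\<Sum>j\<in>J. c1 j * \<alpha> ^ (j * s')) = w s'" unfolding w_def by simp
    qed
    have "\<forall>s\<in>Sset. (\<Sum>j\<in>J. (c1 j - c0 j) * \<alpha> ^ (j * s)) = 0"
      using c0 c1 by (simp add: left_diff_distrib sum_subtractf)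
    then have "\<forall>j\<in>J. c1 j - c0 j = 0" by (rule uniq_J)
    then show ?thesis unfolding c1_def by (simp add: F_iff)
  qed
  define c where "c i = (if i \<in> I then v i else if i \<in> J then c0 i else 0)" for i
  have "c \<in> Cd"
  proof (unfold C_iff, intro conjI allI impI ballI)
    fix i assume "i < n"
    then show "c i \<in> F" unfolding c_def using v c0F F_0 by auto
  next
    fix i assume "n \<le> i"
    then show "c i = 0" unfolding c_def by auto
  next
    fix s assume s: "s \<in> Sset"
    have "(\<Sum>i<n. c i * \<alpha> ^ (i * s)) = (\<Sum>i\<in>I. c i * \<alpha> ^ (i * s)) + (\<Sum>i\<in>J. c i * \<alpha> ^ (i * s))"
      by (rule sum_split)
    also have "(\<Sum>i\<in>I. c i * \<alpha> ^ (i * s)) = - w s" unfolding w_def c_def by simp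
    also have "(\<Sum>i\<in>J. c i * \<alpha> ^ (i * s)) = w s" using c0 s unfolding c_def by simp
    finally show "(\<Sum>i<n. c i * \<alpha> ^ (i * s)) = 0" by simp
  qed
  moreover have "\<forall>i\<in>I. c i = v i" unfolding c_def by simp
  ultimately show ?thesis by blast
qed

lemma uniqC:
  assumes c: "c \<in> Cd" and c': "c' \<in> Cd" and eq: "\<forall>i\<in>I. c i = c' i"
  shows "c = c'"
proof
  fix i
  have "\<forall>s\<in>Sset. (\<Sum>j\<in>J. (c j - c' j) * \<alpha> ^ (j * s)) = 0"
  proof
    fix s assume s: "s \<in> Sset"
    have "(\<Sum>i<n. (c i - c' i) * \<alpha> ^ (i * s)) =
        (\<Sum>i<n. c i * \<alpha> ^ (i * s)) - (\<Sum>i<n. c' i * \<alpha> ^ (i * s))"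
      by (simp add: left_diff_distrib sum_subtractf)
    also have "\<dots> = 0" using c c' s unfolding C_iff by simp
    finally have "(\<Sum>i<n. (c i - c' i) * \<alpha> ^ (i * s)) = 0" .
    moreover have "(\<Sum>i\<in>I. (c i - c' i) * \<alpha> ^ (i * s)) = 0" using eq by simp
    moreover have "(\<Sum>i<n. (c i - c' i) * \<alpha> ^ (i * s)) =
        (\<Sum>i\<in>I. (c i - c' i) * \<alpha> ^ (i * s)) + (\<Sum>i\<in>J. (c i - c' i) * \<alpha> ^ (i * s))"
      by (rule sum_split)
    ultimately show "(\<Sum>j\<in>J. (c j - c' j) * \<alpha> ^ (j * s)) = 0" by simp
  qed
  then have "\<forall>j\<in>J. c j - c' j = 0" by (rule uniq_J)
  then have "\<forall>j\<in>J. c j = c' j" by simp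
  then show "c i = c' i" using eq c c' unfolding C_iff by (cases "i < n") auto
qed

lemma card_C: "card Cd = q ^ card I"
proof -
  have "bij_betw (\<lambda>c. restrict c I) Cd (PiE I (\<lambda>_. F))"
  proof (rule bij_betw_imageI)
    show "inj_on (\<lambda>c. restrict c I) Cd"
    proof (rule inj_onI)
      fix c c' assume cc: "c \<in> Cd" "c' \<in> Cd" and r: "restrict c I = restrict c' I"
      have "\<forall>i\<in>I. c i = c' i"
      proof
        fix i assume "i \<in> I"
        then show "c i = c' i" using fun_cong[OF r, of i] by simp
      qed
      then show "c = c'" using uniqC cc by blast
    qed
    show "(\<lambda>c. restrict c I) ` Cd = PiE I (\<lambda>_. F)"
    proof
      show "(\<lambda>c. restrict c I) ` Cd \<subseteq> PiE I (\<lambda>_. F)"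
      proof
        fix x assume "x \<in> (\<lambda>c. restrict c I) ` Cd"
        then obtain c where c: "c \<in> Cd" "x = restrict c I" by blast
        have "\<forall>i<n. c i \<in> F" using c(1) unfolding C_iff by blast
        then have "\<forall>i\<in>I. c i \<in> F" by auto
        then show "x \<in> PiE I (\<lambda>_. F)" using c(2) by auto
      qed
      show "PiE I (\<lambda>_. F) \<subseteq> (\<lambda>c. restrict c I) ` Cd"
      proof
        fix v assume v: "v \<in> PiE I (\<lambda>_. F)"
        then have "\<forall>i\<in>I. v i \<in> F" by auto
        then obtain c where c: "c \<in> Cd" "\<forall>i\<in>I. c i = v i" using ext by blast
        have "restrict c I = v" using v c(2) by (intro PiE_ext[OF _ v]) auto
        then show "v \<in> (\<lambda>c. restrict c I) ` Cd" using c(1) by blast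
      qed
    qed
  qed
  then have "card Cd = card (PiE I (\<lambda>_. F))" by (rule bij_betw_same_card)
  also have "\<dots> = q ^ card I" by (simp add: card_PiE card_F)
  finally show ?thesis .
qed

lemma result: "check_positions q {..< q ^ m - 1} Cd J"
  unfolding check_positions_def information_set_def
proof (intro conjI allI impI)
  show "J \<subseteq> {..<n}" by (rule J_sub)
  show "I \<subseteq> {..<n}" by blast
  show "card Cd = q ^ card I" by (rule card_C)
  fix v :: "nat \<Rightarrow> 'K" assume "\<forall>i\<in>I. v i \<in> F"
  then show "\<exists>c\<in>Cd. \<forall>i\<in>I. c i = v i" by (rule ext)
qed

end

theorem mainTheorem6:
  fixes q m r1 r2 a b :: nat
    and \<alpha> :: "'K::{finite,field}"
    and T :: "nat \<Rightarrow> nat \<times> nat"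
  assumes q_pp: "\<exists>p k. prime p \<and> k > 0 \<and> q = p ^ k"
    and q_gt: "q > 2"
    and m_pos: "m \<ge> 1"
    and card_K: "card (UNIV :: 'K set) = q ^ m"
    and n_fact: "q ^ m - 1 = r1 * r2"
    and r1_gt: "r1 > 1" and r2_gt: "r2 > 1"
    and coprime: "coprime r1 r2"
    and r1_def: "r1 = q ^ a - 1"
    and m_ab: "m = a * b"
    and gen: "\<alpha> \<noteq> 0" "\<forall>x::'K. x \<noteq> 0 \<longrightarrow> (\<exists>k. x = \<alpha> ^ k)"
    and T_bij: "bij_betw T {..< q ^ m - 1} ({..< r1} \<times> {..< r2})"
    and T_hom: "\<forall>i < q ^ m - 1. \<forall>j < q ^ m - 1.
                  T ((i + j) mod (q ^ m - 1)) =
                  ((fst (T i) + fst (T j)) mod r1, (snd (T i) + snd (T j)) mod r2)"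
  shows "check_positions q {..< q ^ m - 1}
           (punctured_GRM q m (m * (q - 1) - 3) \<alpha>)
           {i \<in> {..< q ^ m - 1}. T i \<in> Gamma_set a b}"
proof -
  have G: "grm q m r1 r2 a b \<alpha> T"
    by (rule grm.intro) (rule q_pp q_gt m_pos card_K n_fact r1_gt r2_gt coprime r1_def m_ab gen T_bij T_hom)+
  show ?thesis by (rule grm.result[OF G])
qed

end
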